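(* Let $D$ be a $\ast$-SH domain and let $I$ be a proper integral $\ast$-invertible $\ast$-ideal of $D$. Then $I$ is expressible, uniquely up to order, as a $\ast$-product of finitely many mutually $\ast$-comaximal $\ast$-homog ideals.
   Context: $\ast$ is a star operation on the integral domain $D$ of finite character. A $\ast$-ideal is a nonzero fractional ideal $I$ with $I^\ast=I$; of finite type if $I=J^\ast$ for some nonzero finitely generated $J$. A maximal $\ast$-ideal is an integral $\ast$-ideal maximal among proper integral $\ast$-ideals. $I$ is $\ast$-invertible if $(II^{-1})^\ast=D$. Ideals $A,B$ are $\ast$-comaximal if $(A+B)^\ast=D$. A $\ast$-homog ideal is a proper integral $\ast$-ideal $I$ of finite type such that $(A+B)^\ast\neq D$ for every pair $A,B$ of proper integral $\ast$-ideals of finite type containing $I$. $D$ is a $\ast$-SH domain if for every nonzero nonunit $x$, $xD=(I_1\cdots I_n)^\ast$ for finitely many $\ast$-homog ideals $I_i$. *)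

theory Defs
  imports "HOL-Library.Multiset"
begin

definition is_domain_in :: "'k::field set \<Rightarrow> bool" where
  "is_domain_in D \<longleftrightarrow> 0 \<in> D \<and> 1 \<in> D \<and>
     (\<forall>a\<in>D. \<forall>b\<in>D. a + b \<in> D \<and> a - b \<in> D \<and> a * b \<in> D) \<and>
     (\<forall>x. \<exists>a\<in>D. \<exists>b\<in>D. b \<noteq> 0 \<and> x = a / b)"

definition frac_ideal :: "'k::field set \<Rightarrow> 'k set \<Rightarrow> bool" where
  "frac_ideal D I \<longleftrightarrow> 0 \<in> I \<and> (\<forall>x\<in>I. \<forall>y\<in>I. x + y \<in> I) \<and>
     (\<forall>d\<in>D. \<forall>x\<in>I. d * x \<in> I) \<and> I \<noteq> {0} \<and>
     (\<exists>d\<in>D. d \<noteq> 0 \<and> (\<forall>x\<in>I. d * x \<in> D))"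

definition principal :: "'k::field set \<Rightarrow> 'k \<Rightarrow> 'k set" where
  "principal D x = {x * d | d. d \<in> D}"

definition smult_set :: "'k::field \<Rightarrow> 'k set \<Rightarrow> 'k set" where
  "smult_set x I = (\<lambda>y. x * y) ` I"

definition gen :: "'k::field set \<Rightarrow> 'k set \<Rightarrow> 'k set" where
  "gen D S = {\<Sum>s\<in>S. c s * s | c. \<forall>s\<in>S. c s \<in> D}"

definition fin_gen :: "'k::field set \<Rightarrow> 'k set \<Rightarrow> bool" where
  "fin_gen D J \<longleftrightarrow> (\<exists>S. finite S \<and> J = gen D S)"

definition idsum :: "'k::field set \<Rightarrow> 'k set \<Rightarrow> 'k set" where
  "idsum I J = {a + b | a b. a \<in> I \<and> b \<in> J}"

definition idprod :: "'k::field set \<Rightarrow> 'k set \<Rightarrow> 'k set" where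
  "idprod I J = {\<Sum>i<n. a i * b i | (n::nat) a b. \<forall>i<n. a i \<in> I \<and> b i \<in> J}"

definition idprod_list :: "'k::field set \<Rightarrow> 'k set list \<Rightarrow> 'k set" where
  "idprod_list D Is = foldr idprod Is D"

definition idinv :: "'k::field set \<Rightarrow> 'k set \<Rightarrow> 'k set" where
  "idinv D I = {x. \<forall>y\<in>I. x * y \<in> D}"

definition star_operation :: "'k::field set \<Rightarrow> ('k set \<Rightarrow> 'k set) \<Rightarrow> bool" where
  "star_operation D st \<longleftrightarrow>
     (\<forall>I. frac_ideal D I \<longrightarrow> frac_ideal D (st I) \<and> I \<subseteq> st I \<and> st (st I) = st I) \<and>
     (\<forall>I J. frac_ideal D I \<and> frac_ideal D J \<and> I \<subseteq> J \<longrightarrow> st I \<subseteq> st J) \<and>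
     (\<forall>x. x \<noteq> 0 \<longrightarrow> st (principal D x) = principal D x) \<and>
     (\<forall>x I. x \<noteq> 0 \<and> frac_ideal D I \<longrightarrow> st (smult_set x I) = smult_set x (st I))"

definition finite_character :: "'k::field set \<Rightarrow> ('k set \<Rightarrow> 'k set) \<Rightarrow> bool" where
  "finite_character D st \<longleftrightarrow>
     (\<forall>I. frac_ideal D I \<longrightarrow>
        st I = \<Union>{st J | J. frac_ideal D J \<and> fin_gen D J \<and> J \<subseteq> I})"

definition star_ideal :: "'k::field set \<Rightarrow> ('k set \<Rightarrow> 'k set) \<Rightarrow> 'k set \<Rightarrow> bool" where
  "star_ideal D st I \<longleftrightarrow> frac_ideal D I \<and> st I = I"

definition finite_type :: "'k::field set \<Rightarrow> ('k set \<Rightarrow> 'k set) \<Rightarrow> 'k set \<Rightarrow> bool" where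
  "finite_type D st I \<longleftrightarrow> (\<exists>J. frac_ideal D J \<and> fin_gen D J \<and> I = st J)"

definition star_invertible :: "'k::field set \<Rightarrow> ('k set \<Rightarrow> 'k set) \<Rightarrow> 'k set \<Rightarrow> bool" where
  "star_invertible D st I \<longleftrightarrow> frac_ideal D I \<and> st (idprod I (idinv D I)) = D"

definition star_comaximal :: "'k::field set \<Rightarrow> ('k set \<Rightarrow> 'k set) \<Rightarrow> 'k set \<Rightarrow> 'k set \<Rightarrow> bool" where
  "star_comaximal D st A B \<longleftrightarrow> st (idsum A B) = D"

definition pift :: "'k::field set \<Rightarrow> ('k set \<Rightarrow> 'k set) \<Rightarrow> 'k set \<Rightarrow> bool" where
  "pift D st I \<longleftrightarrow> star_ideal D st I \<and> I \<subseteq> D \<and> I \<noteq> D \<and> finite_type D st I"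

definition star_homog :: "'k::field set \<Rightarrow> ('k set \<Rightarrow> 'k set) \<Rightarrow> 'k set \<Rightarrow> bool" where
  "star_homog D st I \<longleftrightarrow> pift D st I \<and>
     (\<forall>A B. pift D st A \<and> pift D st B \<and> I \<subseteq> A \<and> I \<subseteq> B \<longrightarrow> st (idsum A B) \<noteq> D)"

definition star_SH :: "'k::field set \<Rightarrow> ('k set \<Rightarrow> 'k set) \<Rightarrow> bool" where
  "star_SH D st \<longleftrightarrow> (\<forall>x\<in>D. x \<noteq> 0 \<and> inverse x \<notin> D \<longrightarrow>
     (\<exists>Is. (\<forall>J\<in>set Is. star_homog D st J) \<and> principal D x = st (idprod_list D Is)))"

definition homog_comax_factorization ::
  "'k::field set \<Rightarrow> ('k set \<Rightarrow> 'k set) \<Rightarrow> 'k set \<Rightarrow> 'k set list \<Rightarrow> bool" where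
  "homog_comax_factorization D st I Is \<longleftrightarrow>
     (\<forall>J\<in>set Is. star_homog D st J) \<and>
     (\<forall>i<length Is. \<forall>j<length Is. i \<noteq> j \<longrightarrow> star_comaximal D st (Is ! i) (Is ! j)) \<and>
     I = st (idprod_list D Is)"

end

theory Submission
  imports Defs
begin


definition mdl :: "'k::field set \<Rightarrow> 'k set \<Rightarrow> bool" where
  "mdl D M \<longleftrightarrow> 0 \<in> M \<and> (\<forall>x\<in>M. \<forall>y\<in>M. x + y \<in> M) \<and> (\<forall>d\<in>D. \<forall>x\<in>M. d * x \<in> M)"

lemma mdlI: "0 \<in> M \<Longrightarrow> (\<And>x y. x\<in>M \<Longrightarrow> y\<in>M \<Longrightarrow> x + y \<in> M) \<Longrightarrow> (\<And>d x. d\<in>D \<Longrightarrow> x\<in>M \<Longrightarrow> d * x \<in> M) \<Longrightarrow> mdl D M"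
  unfolding mdl_def by blast
lemma mdl_0: "mdl D M \<Longrightarrow> 0 \<in> M" unfolding mdl_def by blast
lemma mdl_add: "mdl D M \<Longrightarrow> x\<in>M \<Longrightarrow> y\<in>M \<Longrightarrow> x + y \<in> M" unfolding mdl_def by blast
lemma mdl_mult: "mdl D M \<Longrightarrow> d\<in>D \<Longrightarrow> x\<in>M \<Longrightarrow> d * x \<in> M" unfolding mdl_def by blast
lemma mdl_sum: "mdl D M \<Longrightarrow> (\<And>i. i\<in>F \<Longrightarrow> f i \<in> M) \<Longrightarrow> sum f F \<in> M"
  by (induction F rule: infinite_finite_induct) (auto simp: mdl_0 mdl_add)

lemma sum_shift: "(\<Sum>i<(n::nat)+m. h i) = (\<Sum>i<n. h i) + (\<Sum>i<m. (h (i+n)::'a::comm_monoid_add))"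
  by (induction m) (auto simp: add_ac)

lemma idprod_zero: "0 \<in> idprod A B"
  unfolding idprod_def by (rule CollectI, rule exI[of _ 0], auto)

lemma idprod_mem: "a \<in> A \<Longrightarrow> b \<in> B \<Longrightarrow> a * b \<in> idprod A B"
  unfolding idprod_def
  by (rule CollectI, rule exI[of _ 1], rule exI[of _ "\<lambda>_. a"], rule exI[of _ "\<lambda>_. b"], auto)

lemma idprod_add: assumes "u \<in> idprod A B" "v \<in> idprod A B" shows "u + v \<in> idprod A B"
proof -
  obtain n :: nat and a b where u: "u = (\<Sum>i<n. a i * b i)" "\<forall>i<n. a i \<in> A \<and> b i \<in> B"
    using assms(1) unfolding idprod_def mem_Collect_eq by blast
  obtain m :: nat and a' b' where v: "v = (\<Sum>i<m. a' i * b' i)" "\<forall>i<m. a' i \<in> A \<and> b' i \<in> B"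
    using assms(2) unfolding idprod_def mem_Collect_eq by blast
  define a'' where "a'' = (\<lambda>i. if i < n then a i else a' (i - n))"
  define b'' where "b'' = (\<lambda>i. if i < n then b i else b' (i - n))"
  have e1: "(\<Sum>i<n+m. a'' i * b'' i) = u + v"
    unfolding sum_shift u v a''_def b''_def by simp
  have e2: "\<forall>i<n+m. a'' i \<in> A \<and> b'' i \<in> B" using u v unfolding a''_def b''_def by auto
  show ?thesis unfolding idprod_def mem_Collect_eq
    apply (rule exI[of _ "n+m"], rule exI[of _ a''], rule exI[of _ b'']) using e1 e2 by simp
qed

lemma idprod_induct[consumes 1]:
  assumes "u \<in> idprod A B" "P 0" "\<And>a b. a\<in>A \<Longrightarrow> b\<in>B \<Longrightarrow> P (a*b)"
    "\<And>x y. P x \<Longrightarrow> P y \<Longrightarrow> P (x+y)"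
  shows "P u"
proof -
  obtain n :: nat and a b where u: "u = (\<Sum>i<n. a i * b i)" "\<forall>i<n. a i \<in> A \<and> b i \<in> B"
    using assms(1) unfolding idprod_def mem_Collect_eq by blast
  have "P (\<Sum>i<n. a i * b i)" using u(2) by (induction n) (auto simp: assms)
  thus ?thesis using u by simp
qed

lemma idprod_least: "0 \<in> C \<Longrightarrow> (\<And>x y. x\<in>C \<Longrightarrow> y\<in>C \<Longrightarrow> x+y\<in>C) \<Longrightarrow>
   (\<And>a b. a\<in>A \<Longrightarrow> b\<in>B \<Longrightarrow> a*b \<in> C) \<Longrightarrow> idprod A B \<subseteq> C"
  by (auto elim: idprod_induct[where P="\<lambda>u. u \<in> C"])

lemma idprod_least_mdl: "mdl D C \<Longrightarrow> (\<And>a b. a\<in>A \<Longrightarrow> b\<in>B \<Longrightarrow> a*b \<in> C) \<Longrightarrow> idprod A B \<subseteq> C"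
  by (rule idprod_least) (auto simp: mdl_0 mdl_add)

lemma idprod_dmult: assumes "mdl D A" "d \<in> D" "u \<in> idprod A B" shows "d * u \<in> idprod A B"
  using assms(3) apply (induction rule: idprod_induct)
  apply (simp add: idprod_zero)
   apply (metis assms(1,2) idprod_mem mdl_mult mult.assoc)
  by (simp add: distrib_left idprod_add)

lemma mdl_idprod: "mdl D A \<Longrightarrow> mdl D (idprod A B)"
  by (rule mdlI) (auto simp: idprod_zero idprod_add idprod_dmult)

lemma idprod_comm_sub: "idprod A B \<subseteq> idprod B A"
  by (rule idprod_least) (auto simp: idprod_zero idprod_add, metis idprod_mem mult.commute)

lemma idprod_comm: "idprod A B = idprod B A"
  by (simp add: idprod_comm_sub subset_antisym)

lemma idprod_assoc_sub: "idprod (idprod A B) C \<subseteq> idprod A (idprod B C)"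
proof (rule idprod_least)
  fix v c assume v: "v \<in> idprod A B" and c: "c \<in> C"
  show "v * c \<in> idprod A (idprod B C)"
    using v apply (induction rule: idprod_induct)
    apply (simp add: idprod_zero)
     apply (metis c idprod_mem mult.assoc)
    by (simp add: distrib_right idprod_add)
qed (auto simp: idprod_zero idprod_add)

lemma idprod_assoc: "idprod (idprod A B) C = idprod A (idprod B C)"
proof
  show "idprod A (idprod B C) \<subseteq> idprod (idprod A B) C"
    by (metis idprod_assoc_sub idprod_comm)
qed (rule idprod_assoc_sub)

lemma idprod_mono: "A \<subseteq> A' \<Longrightarrow> B \<subseteq> B' \<Longrightarrow> idprod A B \<subseteq> idprod A' B'"
  by (rule idprod_least) (auto simp: idprod_zero idprod_add intro!: idprod_mem)

lemma idprod_integral_left: "A \<subseteq> D \<Longrightarrow> mdl D B \<Longrightarrow> idprod A B \<subseteq> B"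
  by (rule idprod_least_mdl) (auto simp: mdl_mult)

lemma idprod_integral_right: "B \<subseteq> D \<Longrightarrow> mdl D A \<Longrightarrow> idprod A B \<subseteq> A"
  by (metis idprod_comm idprod_integral_left)

lemma idsum_mem1: "mdl D B \<Longrightarrow> a \<in> A \<Longrightarrow> a \<in> idsum A B"
  unfolding idsum_def by (rule CollectI, rule exI[of _ a], rule exI[of _ 0], auto simp: mdl_0)
lemma idsum_mem2: "mdl D A \<Longrightarrow> b \<in> B \<Longrightarrow> b \<in> idsum A B"
  unfolding idsum_def by (rule CollectI, rule exI[of _ 0], rule exI[of _ b], auto simp: mdl_0)
lemma idsum_sub1: "mdl D B \<Longrightarrow> A \<subseteq> idsum A B" using idsum_mem1 by blast
lemma idsum_sub2: "mdl D A \<Longrightarrow> B \<subseteq> idsum A B" using idsum_mem2 by blast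
lemma idsum_least: "mdl D C \<Longrightarrow> A \<subseteq> C \<Longrightarrow> B \<subseteq> C \<Longrightarrow> idsum A B \<subseteq> C"
  unfolding idsum_def using mdl_add by blast
lemma idsum_comm: "idsum A B = idsum B A"
  unfolding idsum_def by (auto; metis add.commute)
lemma idsum_mono: "A \<subseteq> A' \<Longrightarrow> B \<subseteq> B' \<Longrightarrow> idsum A B \<subseteq> idsum A' B'"
  unfolding idsum_def by blast
lemma mdl_idsum: assumes A: "mdl D A" and B: "mdl D B" shows "mdl D (idsum A B)"
proof (rule mdlI)
  show "0 \<in> idsum A B" using idsum_mem1[OF B mdl_0[OF A]] .
  fix u v assume "u \<in> idsum A B" "v \<in> idsum A B"
  then obtain a b a' b' where u: "u = a + b" "a \<in> A" "b \<in> B" and v: "v = a' + b'" "a' \<in> A" "b' \<in> B"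
    unfolding idsum_def by blast
  have "u + v = (a + a') + (b + b')" using u v by (simp add: algebra_simps)
  moreover have "a + a' \<in> A" "b + b' \<in> B" using u v A B by (auto intro: mdl_add)
  ultimately show "u + v \<in> idsum A B" unfolding idsum_def by blast
next
  fix d u assume d: "d \<in> D" and "u \<in> idsum A B"
  then obtain a b where u: "u = a + b" "a \<in> A" "b \<in> B" unfolding idsum_def by blast
  have "d * u = d * a + d * b" using u by (simp add: algebra_simps)
  moreover have "d * a \<in> A" "d * b \<in> B" using u d A B by (auto intro: mdl_mult)
  ultimately show "d * u \<in> idsum A B" unfolding idsum_def by blast
qed

lemma idsum_absorb: assumes "mdl D A" "B \<subseteq> A" "0 \<in> B" shows "idsum A B = A"
proof
  show "idsum A B \<subseteq> A" using assms by (intro idsum_least) auto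
  show "A \<subseteq> idsum A B"
  proof
    fix x assume "x \<in> A"
    hence "x = x + 0 \<and> x \<in> A \<and> 0 \<in> B" using assms(3) by simp
    thus "x \<in> idsum A B" unfolding idsum_def by blast
  qed
qed



lemma dom_facts: assumes "is_domain_in D"
  shows "0 \<in> D" "1 \<in> D" "\<And>a b. a\<in>D \<Longrightarrow> b\<in>D \<Longrightarrow> a+b \<in> D"
    "\<And>a b. a\<in>D \<Longrightarrow> b\<in>D \<Longrightarrow> a*b \<in> D" "\<And>x. \<exists>a\<in>D. \<exists>b\<in>D. b \<noteq> 0 \<and> x = a / b"
  using assms unfolding is_domain_in_def by auto

lemma frac_iff: "frac_ideal D A \<longleftrightarrow> mdl D A \<and> A \<noteq> {0} \<and> (\<exists>d\<in>D. d \<noteq> 0 \<and> (\<forall>x\<in>A. d * x \<in> D))"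
  unfolding frac_ideal_def mdl_def by blast

lemma frac_mdl: "frac_ideal D A \<Longrightarrow> mdl D A" by (simp add: frac_iff)

lemma frac_nz: assumes "frac_ideal D A" obtains a where "a \<in> A" "a \<noteq> 0"
  using assms unfolding frac_iff by (metis mdl_0 insertI1 subsetI subset_antisym singletonD)

lemma frac_0: "frac_ideal D A \<Longrightarrow> 0 \<in> A" by (simp add: frac_ideal_def)

lemma smult_set_mem: "a \<in> A \<Longrightarrow> x * a \<in> smult_set x A" unfolding smult_set_def by blast

context fixes D :: "'k::field set" assumes dom: "is_domain_in D"
begin

lemma mdl_D: "mdl D D" using dom_facts[OF dom] by (intro mdlI) auto

lemma frac_D: "frac_ideal D D"
  unfolding frac_iff using dom_facts[OF dom] mdl_D
  by (metis mult_1 one_neq_zero singletonD)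

lemma frac_integral: "mdl D A \<Longrightarrow> A \<subseteq> D \<Longrightarrow> A \<noteq> {0} \<Longrightarrow> frac_ideal D A"
  unfolding frac_iff using dom_facts[OF dom] by (metis mult_1 one_neq_zero subsetD)

lemma frac_bound: assumes "frac_ideal D A" obtains d where "d \<in> D" "d \<noteq> 0" "\<forall>x\<in>A. d*x \<in> D"
  using assms unfolding frac_iff by blast

lemma frac_idprod: assumes A: "frac_ideal D A" and B: "frac_ideal D B" shows "frac_ideal D (idprod A B)"
proof -
  obtain a where a: "a \<in> A" "a \<noteq> 0" using A by (rule frac_nz)
  obtain b where b: "b \<in> B" "b \<noteq> 0" using B by (rule frac_nz)
  obtain d where d: "d \<in> D" "d \<noteq> 0" "\<forall>x\<in>A. d*x \<in> D" using A by (rule frac_bound)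
  obtain e where e: "e \<in> D" "e \<noteq> 0" "\<forall>x\<in>B. e*x \<in> D" using B by (rule frac_bound)
  have "a * b \<in> idprod A B" "a * b \<noteq> 0" using a b by (auto intro: idprod_mem)
  hence nz: "idprod A B \<noteq> {0}" by blast
  have bd: "d * e * u \<in> D" if "u \<in> idprod A B" for u
    using that apply (induction rule: idprod_induct)
    using dom_facts[OF dom] apply simp
    subgoal premises p for x y proof -
      have "d * e * (x * y) = (d*x)*(e*y)" by (simp add: algebra_simps)
      moreover have "d*x \<in> D" "e*y \<in> D" using d e p by auto
      ultimately show ?thesis using dom_facts(4)[OF dom] by metis
    qed
    by (simp add: distrib_left dom_facts[OF dom])
  show ?thesis unfolding frac_iff using mdl_idprod[OF frac_mdl[OF A]] nz bd d e dom_facts(4)[OF dom, of d e]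
    by (metis mult_eq_0_iff)
qed

lemma frac_idsum: assumes A: "frac_ideal D A" and B: "frac_ideal D B" shows "frac_ideal D (idsum A B)"
proof -
  obtain a where a: "a \<in> A" "a \<noteq> 0" using A by (rule frac_nz)
  obtain d where d: "d \<in> D" "d \<noteq> 0" "\<forall>x\<in>A. d*x \<in> D" using A by (rule frac_bound)
  obtain e where e: "e \<in> D" "e \<noteq> 0" "\<forall>x\<in>B. e*x \<in> D" using B by (rule frac_bound)
  have "a \<in> idsum A B" using a frac_mdl[OF B] by (simp add: idsum_mem1)
  hence nz: "idsum A B \<noteq> {0}" using a by blast
  have bd: "d * e * u \<in> D" if hu: "u \<in> idsum A B" for u
  proof -
    obtain x y where u: "u = x + y" "x \<in> A" "y \<in> B" using hu unfolding idsum_def by blast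
    have "d * e * u = e * (d * x) + d * (e * y)" unfolding u by (simp add: algebra_simps)
    thus ?thesis using d e u dom_facts[OF dom] by simp
  qed
  show ?thesis unfolding frac_iff using mdl_idsum[OF frac_mdl[OF A] frac_mdl[OF B]] nz bd d e dom_facts(4)[OF dom, of d e]
    by (metis mult_eq_0_iff)
qed

lemma frac_smult: assumes A: "frac_ideal D A" and x: "x \<noteq> 0" shows "frac_ideal D (smult_set x A)"
proof -
  obtain a where a: "a \<in> A" "a \<noteq> 0" using A by (rule frac_nz)
  obtain d where d: "d \<in> D" "d \<noteq> 0" "\<forall>x\<in>A. d*x \<in> D" using A by (rule frac_bound)
  obtain p q where pq: "p \<in> D" "q \<in> D" "q \<noteq> 0" "x = p / q" using dom_facts(5)[OF dom] by blast
  have M: "mdl D A" using A by (rule frac_mdl)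
  have "mdl D (smult_set x A)"
  proof (rule mdlI)
    show "0 \<in> smult_set x A" using smult_set_mem[OF mdl_0[OF M], of x] by simp
    fix u v assume "u \<in> smult_set x A" "v \<in> smult_set x A"
    then obtain a b where "u = x*a" "v = x*b" "a\<in>A" "b\<in>A" unfolding smult_set_def by blast
    thus "u + v \<in> smult_set x A" using smult_set_mem[OF mdl_add[OF M], of a b x] by (simp add: distrib_left)
  next
    fix c u assume "c \<in> D" "u \<in> smult_set x A"
    then obtain a where "u = x*a" "a\<in>A" "c \<in> D" unfolding smult_set_def by blast
    thus "c * u \<in> smult_set x A" using smult_set_mem[OF mdl_mult[OF M], of c a x] by (simp add: algebra_simps)
  qed
  moreover have "x * a \<in> smult_set x A" "x * a \<noteq> 0" using a x by (auto intro: smult_set_mem)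
  hence "smult_set x A \<noteq> {0}" by blast
  moreover have "q * d * u \<in> D" if hu: "u \<in> smult_set x A" for u
  proof -
    obtain b where b: "u = x * b" "b \<in> A" using hu unfolding smult_set_def by blast
    have "q * d * u = p * (d * b)" unfolding b pq(4) using pq(3) by (simp add: field_simps)
    moreover have "d * b \<in> D" using d b by auto
    ultimately show ?thesis using pq dom_facts(4)[OF dom] by metis
  qed
  moreover have "q * d \<in> D" "q * d \<noteq> 0" using pq d dom_facts[OF dom] by auto
  ultimately show ?thesis unfolding frac_iff by blast
qed

lemma principal_1: "principal D 1 = D" unfolding principal_def by auto

lemma principal_sub: "mdl D I \<Longrightarrow> x \<in> I \<Longrightarrow> principal D x \<subseteq> I"
  unfolding principal_def by (auto simp: mult.commute intro: mdl_mult)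

lemma idprod_D_left: "mdl D A \<Longrightarrow> idprod D A = A"
proof
  assume M: "mdl D A"
  show "idprod D A \<subseteq> A" by (rule idprod_integral_left[OF order_refl M])
  show "A \<subseteq> idprod D A" using idprod_mem[OF dom_facts(2)[OF dom]] by (metis mult_1 subsetI)
qed

lemma idprod_D_right: "mdl D A \<Longrightarrow> idprod A D = A"
  by (metis idprod_D_left idprod_comm)

lemma gen_mdl: "mdl D (gen D S)"
proof (rule mdlI)
  show "0 \<in> gen D S" unfolding gen_def using dom_facts[OF dom]
    by (intro CollectI exI[of _ "\<lambda>_. 0"]) auto
  fix u v assume "u \<in> gen D S" "v \<in> gen D S"
  then obtain c e where "u = (\<Sum>s\<in>S. c s * s)" "v = (\<Sum>s\<in>S. e s * s)" "\<forall>s\<in>S. c s \<in> D" "\<forall>s\<in>S. e s \<in> D"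
    unfolding gen_def by blast
  thus "u + v \<in> gen D S" unfolding gen_def using dom_facts[OF dom]
    by (intro CollectI exI[of _ "\<lambda>s. c s + e s"]) (auto simp: sum.distrib distrib_right)
next
  fix d u assume "d \<in> D" "u \<in> gen D S"
  then obtain c where "u = (\<Sum>s\<in>S. c s * s)" "\<forall>s\<in>S. c s \<in> D" "d \<in> D"
    unfolding gen_def by blast
  thus "d * u \<in> gen D S" unfolding gen_def using dom_facts[OF dom]
    by (intro CollectI exI[of _ "\<lambda>s. d * c s"]) (auto simp: sum_distrib_left mult.assoc)
qed

lemma gen_mem: assumes "finite S" "s \<in> S" shows "s \<in> gen D S"
proof -
  have "(\<Sum>t\<in>S. (if t = s then 1 else 0) * t) = (\<Sum>t\<in>S. (if t = s then t else 0))"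
    by (rule sum.cong) auto
  also have "\<dots> = s" using assms by simp
  finally have "(\<Sum>t\<in>S. (if t = s then 1 else 0) * t) = s" .
  thus ?thesis unfolding gen_def using dom_facts[OF dom]
    by (intro CollectI exI[of _ "\<lambda>t. if t = s then 1 else 0"]) auto
qed

lemma gen_least: "mdl D M \<Longrightarrow> S \<subseteq> M \<Longrightarrow> gen D S \<subseteq> M"
  unfolding gen_def by (auto intro!: mdl_sum mdl_mult)

lemma gen_union: assumes "finite S" "finite T" shows "idsum (gen D S) (gen D T) = gen D (S \<union> T)"
proof
  show "idsum (gen D S) (gen D T) \<subseteq> gen D (S \<union> T)"
    using assms by (intro idsum_least[OF gen_mdl] gen_least[OF gen_mdl]) (auto intro: gen_mem)
  show "gen D (S \<union> T) \<subseteq> idsum (gen D S) (gen D T)"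
    using assms by (intro gen_least mdl_idsum gen_mdl)
      (auto intro: idsum_mem1 idsum_mem2 gen_mem gen_mdl)
qed

lemma gen_prod: assumes "finite S" "finite T"
  shows "idprod (gen D S) (gen D T) = gen D ((\<lambda>(s,t). s*t) ` (S \<times> T))"
    (is "_ = gen D ?ST")
proof
  have fin: "finite ?ST" using assms by simp
  show "gen D ?ST \<subseteq> idprod (gen D S) (gen D T)"
    using assms by (intro gen_least mdl_idprod gen_mdl) (auto intro!: idprod_mem gen_mem)
  show "idprod (gen D S) (gen D T) \<subseteq> gen D ?ST"
  proof (rule idprod_least_mdl[OF gen_mdl])
    fix a b assume "a \<in> gen D S" "b \<in> gen D T"
    then obtain c e where ab: "a = (\<Sum>s\<in>S. c s * s)" "b = (\<Sum>t\<in>T. e t * t)" "\<forall>s\<in>S. c s \<in> D" "\<forall>t\<in>T. e t \<in> D"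
      unfolding gen_def by blast
    have "a * b = (\<Sum>s\<in>S. \<Sum>t\<in>T. (c s * e t) * (s * t))"
      unfolding ab sum_product by (simp add: algebra_simps)
    also have "\<dots> \<in> gen D ?ST"
    proof (intro mdl_sum[OF gen_mdl])
      fix s t assume st: "s \<in> S" "t \<in> T"
      have "c s * e t \<in> D" using ab st dom_facts(4)[OF dom] by simp
      moreover have "s * t \<in> gen D ?ST" using st fin by (intro gen_mem) auto
      ultimately show "c s * e t * (s * t) \<in> gen D ?ST" by (rule mdl_mult[OF gen_mdl])
    qed
    finally show "a * b \<in> gen D ?ST" .
  qed
qed

end


locale SD = fixes D :: "'k::field set" and st :: "'k set \<Rightarrow> 'k set"
  assumes dom: "is_domain_in D" and so: "star_operation D st"
begin

lemma st_frac: "frac_ideal D A \<Longrightarrow> frac_ideal D (st A)" using so unfolding star_operation_def by blast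
lemma st_ext: "frac_ideal D A \<Longrightarrow> A \<subseteq> st A" using so unfolding star_operation_def by blast
lemma st_idem: "frac_ideal D A \<Longrightarrow> st (st A) = st A" using so unfolding star_operation_def by blast
lemma st_mono: "frac_ideal D A \<Longrightarrow> frac_ideal D B \<Longrightarrow> A \<subseteq> B \<Longrightarrow> st A \<subseteq> st B"
  using so unfolding star_operation_def by blast
lemma st_smult: "x \<noteq> 0 \<Longrightarrow> frac_ideal D I \<Longrightarrow> st (smult_set x I) = smult_set x (st I)"
  using so unfolding star_operation_def by blast
lemma st_princ: "x \<noteq> 0 \<Longrightarrow> st (principal D x) = principal D x"
  using so unfolding star_operation_def by blast
lemma st_D: "st D = D" using st_princ[of 1] principal_1[OF dom] by simp
lemma st_mdl: "frac_ideal D A \<Longrightarrow> mdl D (st A)" by (simp add: frac_mdl st_frac)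
lemma st_integral: "frac_ideal D A \<Longrightarrow> A \<subseteq> D \<Longrightarrow> st A \<subseteq> D"
  using st_mono[OF _ frac_D[OF dom]] st_D by auto

lemmas fD = frac_D[OF dom]
lemmas fprod = frac_idprod[OF dom]
lemmas fsum = frac_idsum[OF dom]

lemma st_prod_left: assumes A: "frac_ideal D A" and B: "frac_ideal D B"
  shows "st (idprod (st A) B) = st (idprod A B)"
proof
  have "idprod (st A) B \<subseteq> st (idprod A B)"
  proof (rule idprod_least_mdl[OF st_mdl[OF fprod[OF A B]]])
    fix a b assume a: "a \<in> st A" and b: "b \<in> B"
    show "a * b \<in> st (idprod A B)"
    proof (cases "b = 0")
      case True thus ?thesis using frac_0[OF st_frac[OF fprod[OF A B]]] by simp
    next
      case False
      have "b * a \<in> smult_set b (st A)" using a by (rule smult_set_mem)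
      also have "\<dots> = st (smult_set b A)" using st_smult[OF False A] by simp
      also have "\<dots> \<subseteq> st (idprod A B)"
        apply (rule st_mono[OF frac_smult[OF dom A False] fprod[OF A B]])
        unfolding smult_set_def using b by (auto simp: mult.commute intro: idprod_mem)
      finally show ?thesis by (simp add: mult.commute)
    qed
  qed
  thus "st (idprod (st A) B) \<subseteq> st (idprod A B)"
    using st_mono[OF fprod[OF st_frac[OF A] B] st_frac[OF fprod[OF A B]]] st_idem[OF fprod[OF A B]] by blast
  show "st (idprod A B) \<subseteq> st (idprod (st A) B)"
    by (rule st_mono[OF fprod[OF A B] fprod[OF st_frac[OF A] B] idprod_mono[OF st_ext[OF A] order_refl]])
qed

lemma st_prod_right: "frac_ideal D A \<Longrightarrow> frac_ideal D B \<Longrightarrow> st (idprod A (st B)) = st (idprod A B)"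
  using st_prod_left[of B A] by (simp add: idprod_comm)

lemma st_prod_both: "frac_ideal D A \<Longrightarrow> frac_ideal D B \<Longrightarrow> st (idprod (st A) (st B)) = st (idprod A B)"
  using st_prod_left[of A "st B"] st_prod_right[of A B] st_frac[of B] by simp

lemma st_sum_left: assumes A: "frac_ideal D A" and B: "frac_ideal D B"
  shows "st (idsum (st A) B) = st (idsum A B)"
proof
  have "idsum (st A) B \<subseteq> st (idsum A B)"
  proof (rule idsum_least[OF st_mdl[OF fsum[OF A B]]])
    show "st A \<subseteq> st (idsum A B)"
      using st_mono[OF A fsum[OF A B] idsum_sub1[OF frac_mdl[OF B]]] .
    show "B \<subseteq> st (idsum A B)"
      using idsum_sub2[OF frac_mdl[OF A]] st_ext[OF fsum[OF A B]] by blast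
  qed
  thus "st (idsum (st A) B) \<subseteq> st (idsum A B)"
    using st_mono[OF fsum[OF st_frac[OF A] B] st_frac[OF fsum[OF A B]]] st_idem[OF fsum[OF A B]] by blast
  show "st (idsum A B) \<subseteq> st (idsum (st A) B)"
    by (rule st_mono[OF fsum[OF A B] fsum[OF st_frac[OF A] B] idsum_mono[OF st_ext[OF A] order_refl]])
qed

lemma st_sum_right: "frac_ideal D A \<Longrightarrow> frac_ideal D B \<Longrightarrow> st (idsum A (st B)) = st (idsum A B)"
  using st_sum_left[of B A] by (simp add: idsum_comm)

lemma st_sum_both: "frac_ideal D A \<Longrightarrow> frac_ideal D B \<Longrightarrow> st (idsum (st A) (st B)) = st (idsum A B)"
  using st_sum_left[of A "st B"] st_sum_right[of A B] st_frac[of B] by simp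

lemma idprod_DD: "idprod D D = D" by (rule idprod_D_left[OF dom mdl_D[OF dom]])

lemma integral_prod: "A \<subseteq> D \<Longrightarrow> B \<subseteq> D \<Longrightarrow> idprod A B \<subseteq> D"
  by (rule order.trans[OF idprod_mono[OF order_refl] idprod_integral_left[OF _ mdl_D[OF dom]]])

lemma integral_sum: "A \<subseteq> D \<Longrightarrow> B \<subseteq> D \<Longrightarrow> idsum A B \<subseteq> D"
  by (rule idsum_least[OF mdl_D[OF dom]])

lemma comax_mono:
  assumes "frac_ideal D A" "frac_ideal D B" "frac_ideal D A'" "frac_ideal D B'" "A \<subseteq> A'" "B \<subseteq> B'"
    "A' \<subseteq> D" "B' \<subseteq> D" "st (idsum A B) = D"
  shows "st (idsum A' B') = D"
proof
  show "st (idsum A' B') \<subseteq> D" using st_integral[OF fsum[OF assms(3,4)] integral_sum[OF assms(7,8)]] .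
  show "D \<subseteq> st (idsum A' B')" using st_mono[OF fsum[OF assms(1,2)] fsum[OF assms(3,4)] idsum_mono[OF assms(5,6)]]
    unfolding assms(9) .
qed

lemma comax_prod:
  assumes J: "frac_ideal D J" "J \<subseteq> D" and A: "frac_ideal D A" "A \<subseteq> D" and B: "frac_ideal D B" "B \<subseteq> D"
    and JA: "st (idsum J A) = D" and JB: "st (idsum J B) = D"
  shows "st (idsum J (idprod A B)) = D"
proof -
  have MJ: "mdl D J" using J by (simp add: frac_mdl)
  have sub: "idprod (idsum J A) (idsum J B) \<subseteq> idsum J (idprod A B)"
  proof (rule idprod_least_mdl[OF mdl_idsum[OF MJ mdl_idprod[OF frac_mdl[OF A(1)]]]])
    fix u v assume "u \<in> idsum J A" "v \<in> idsum J B"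
    then obtain j a j' b where u: "u = j + a" "j \<in> J" "a \<in> A" and v: "v = j' + b" "j' \<in> J" "b \<in> B"
      unfolding idsum_def by blast
    have "v \<in> D" using v J B dom_facts(3)[OF dom, of j' b] by blast
    hence "v * j \<in> J" using v u MJ by (simp add: mdl_mult)
    moreover have "a * j' \<in> J" using u v A MJ by (auto intro: mdl_mult)
    ultimately have "j * v + a * j' \<in> J" using MJ by (simp add: mdl_add mult.commute)
    moreover have "a * b \<in> idprod A B" using u v by (simp add: idprod_mem)
    moreover have "u * v = (j * v + a * j') + a * b" unfolding u v by (simp add: algebra_simps)
    ultimately show "u * v \<in> idsum J (idprod A B)" unfolding idsum_def mem_Collect_eq by metis
  qed
  have "D = st (idprod (st (idsum J A)) (st (idsum J B)))" using JA JB idprod_DD st_D by simp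
  also have "\<dots> = st (idprod (idsum J A) (idsum J B))" using J A B by (intro st_prod_both fsum)
  also have "\<dots> \<subseteq> st (idsum J (idprod A B))" using J A B sub by (intro st_mono fsum fprod)
  finally have "D \<subseteq> st (idsum J (idprod A B))" .
  moreover have "st (idsum J (idprod A B)) \<subseteq> D" using J A B by (intro st_integral fsum fprod integral_sum integral_prod)
  ultimately show ?thesis by blast
qed

lemma cancel:
  assumes A: "frac_ideal D A" "A \<subseteq> D" "st A = A" and B: "frac_ideal D B" "B \<subseteq> D"
    and C: "frac_ideal D C" "C \<subseteq> D" and BC: "idprod B C \<subseteq> A" and AC: "st (idsum A C) = D"
  shows "B \<subseteq> A"
proof -
  have MA: "mdl D A" using A by (simp add: frac_mdl)
  have sub: "idprod B (idsum A C) \<subseteq> A"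
  proof (rule idprod_least_mdl[OF MA])
    fix b u assume b: "b \<in> B" and "u \<in> idsum A C"
    then obtain a c where u: "u = a + c" "a \<in> A" "c \<in> C" unfolding idsum_def by blast
    have "b * a \<in> A" using b B u MA by (auto intro: mdl_mult)
    moreover have "b * c \<in> A" using BC b u idprod_mem by blast
    ultimately show "b * u \<in> A" using MA u by (simp add: distrib_left mdl_add)
  qed
  have "B = idprod B (st (idsum A C))" using AC idprod_D_right[OF dom frac_mdl[OF B(1)]] by simp
  also have "\<dots> \<subseteq> st (idprod B (st (idsum A C)))" using A B C by (intro st_ext fprod st_frac fsum)
  also have "\<dots> = st (idprod B (idsum A C))" using A B C by (intro st_prod_right fsum)
  also have "\<dots> \<subseteq> st A" using A B C sub by (intro st_mono fprod fsum)
  finally show ?thesis using A by simp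
qed

lemma inter_sub:
  assumes A: "frac_ideal D A" "A \<subseteq> D" and B: "frac_ideal D B" "B \<subseteq> D"
    and AB: "st (idsum A B) = D"
  shows "A \<inter> B \<subseteq> st (idprod A B)"
proof -
  have MA: "mdl D A" and MB: "mdl D B" using A B by (auto simp: frac_mdl)
  have M: "mdl D (A \<inter> B)" using MA MB unfolding mdl_def by blast
  obtain a where a: "a \<in> A" "a \<noteq> 0" using A(1) by (rule frac_nz)
  obtain b where b: "b \<in> B" "b \<noteq> 0" using B(1) by (rule frac_nz)
  have "b * a \<in> A" "a * b \<in> B" using a b A B MA MB by (auto intro: mdl_mult)
  hence "a * b \<in> A \<inter> B" "a * b \<noteq> 0" using a b by (auto simp: mult.commute)
  hence F: "frac_ideal D (A \<inter> B)" using M A by (intro frac_integral[OF dom]) blast+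
  have sub: "idprod (A \<inter> B) (idsum A B) \<subseteq> idprod A B"
  proof (rule idprod_least_mdl[OF mdl_idprod[OF MA]])
    fix c u assume c: "c \<in> A \<inter> B" and "u \<in> idsum A B"
    then obtain x y where u: "u = x + y" "x \<in> A" "y \<in> B" unfolding idsum_def by blast
    have "c * x \<in> idprod A B" using c u idprod_mem[of x A c B] by (auto simp: mult.commute)
    moreover have "c * y \<in> idprod A B" using c u idprod_mem by blast
    ultimately show "c * u \<in> idprod A B" by (simp add: u distrib_left idprod_add)
  qed
  have "A \<inter> B = idprod (A \<inter> B) (st (idsum A B))" using AB idprod_D_right[OF dom M] by simp
  also have "\<dots> \<subseteq> st (idprod (A \<inter> B) (st (idsum A B)))" using A B F by (intro st_ext fprod st_frac fsum)
  also have "\<dots> = st (idprod (A \<inter> B) (idsum A B))" using A B F by (intro st_prod_right fsum)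
  also have "\<dots> \<subseteq> st (idprod A B)" using A B F sub by (intro st_mono fprod fsum)
  finally show ?thesis .
qed

end


definition pwl :: "('a \<Rightarrow> 'a \<Rightarrow> bool) \<Rightarrow> 'a list \<Rightarrow> bool" where
  "pwl R L \<longleftrightarrow> (\<forall>i<length L. \<forall>j<length L. i \<noteq> j \<longrightarrow> R (L!i) (L!j))"

definition pwm :: "('a \<Rightarrow> 'a \<Rightarrow> bool) \<Rightarrow> 'a multiset \<Rightarrow> bool" where
  "pwm R M \<longleftrightarrow> (\<forall>x y N. M = add_mset x (add_mset y N) \<longrightarrow> R x y)"

context fixes R :: "'a \<Rightarrow> 'a \<Rightarrow> bool" assumes sym: "\<And>a b. R a b \<Longrightarrow> R b a"
begin

lemma pwl_Nil: "pwl R []" unfolding pwl_def by simp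

lemma pwl_Cons: "pwl R (x # xs) \<longleftrightarrow> (\<forall>y\<in>set xs. R x y) \<and> pwl R xs"
proof
  assume h: "pwl R (x # xs)"
  have "R x y" if "y \<in> set xs" for y
  proof -
    obtain j where j: "j < length xs" "y = xs ! j" using \<open>y \<in> set xs\<close> by (metis in_set_conv_nth)
    show ?thesis using h j unfolding pwl_def by (metis Suc_less_eq length_Cons nat.distinct(1) nth_Cons_0 nth_Cons_Suc zero_less_Suc)
  qed
  moreover have "pwl R xs" using h unfolding pwl_def
    by (metis Suc_less_eq length_Cons nat.inject nth_Cons_Suc)
  ultimately show "(\<forall>y\<in>set xs. R x y) \<and> pwl R xs" by blast
next
  assume h: "(\<forall>y\<in>set xs. R x y) \<and> pwl R xs"
  show "pwl R (x # xs)" unfolding pwl_def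
  proof (intro allI impI)
    fix i j assume ij: "i < length (x # xs)" "j < length (x # xs)" "i \<noteq> j"
    show "R ((x # xs) ! i) ((x # xs) ! j)"
    proof (cases i)
      case 0
      then obtain j' where "j = Suc j'" using ij by (cases j) auto
      thus ?thesis using 0 ij h by simp
    next
      case (Suc i')
      show ?thesis
      proof (cases j)
        case 0 thus ?thesis using Suc ij h sym by simp
      next
        case (Suc j') thus ?thesis using \<open>i = Suc i'\<close> ij h unfolding pwl_def by simp
      qed
    qed
  qed
qed

lemma pwm_empty: "pwm R {#}" unfolding pwm_def by simp

lemma pwm_add: "pwm R (add_mset a M) \<longleftrightarrow> (\<forall>y\<in>#M. R a y) \<and> pwm R M"
proof
  assume h: "pwm R (add_mset a M)"
  have "R a y" if "y \<in># M" for y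
  proof -
    have "add_mset a M = add_mset a (add_mset y (M - {#y#}))" using that by simp
    thus ?thesis using h unfolding pwm_def by blast
  qed
  moreover have "pwm R M" unfolding pwm_def
  proof (intro allI impI)
    fix x y N assume "M = add_mset x (add_mset y N)"
    hence "add_mset a M = add_mset x (add_mset y (add_mset a N))" by simp
    thus "R x y" using h unfolding pwm_def by blast
  qed
  ultimately show "(\<forall>y\<in>#M. R a y) \<and> pwm R M" by blast
next
  assume h: "(\<forall>y\<in>#M. R a y) \<and> pwm R M"
  show "pwm R (add_mset a M)" unfolding pwm_def
  proof (intro allI impI)
    fix x y N assume e: "add_mset a M = add_mset x (add_mset y N)"
    show "R x y"
    proof (cases "x = a")
      case True
      hence "M = add_mset y N" using e by simp
      thus ?thesis using h True by simp
    next
      case False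
      have "x \<in># add_mset a M" unfolding e by simp
      hence "x \<in># M" using False by simp
      then obtain M1 where M1: "M = add_mset x M1" by (metis mset_add)
      hence e2: "add_mset a M1 = add_mset y N" using e by (simp add: add_mset_commute)
      show ?thesis
      proof (cases "y = a")
        case True thus ?thesis using h M1 sym by simp
      next
        case False
        have "y \<in># add_mset a M1" unfolding e2 by simp
        hence "y \<in># M1" using False by simp
        then obtain M2 where "M1 = add_mset y M2" by (metis mset_add)
        thus ?thesis using h M1 unfolding pwm_def by blast
      qed
    qed
  qed
qed

lemma pwl_pwm: "pwl R L \<longleftrightarrow> pwm R (mset L)"
  by (induction L) (auto simp: pwl_Nil pwm_empty pwl_Cons pwm_add)

lemma pwl_perm: "pwl R L \<Longrightarrow> mset L = mset L' \<Longrightarrow> pwl R L'"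
  by (simp add: pwl_pwm)

lemma pwl_two: assumes "pwl R L" "x \<in> set L" "y \<in> set (remove1 x L)" shows "R x y"
proof -
  have "mset L = add_mset x (add_mset y (mset (remove1 y (remove1 x L))))"
    using assms(2,3) by (metis mset_remove1 insert_DiffM in_multiset_in_set set_mset_mset)
  thus ?thesis using assms(1) unfolding pwl_pwm pwm_def by blast
qed

lemma not_pwl: assumes "\<not> pwl R L" obtains x y rest where "mset L = add_mset x (add_mset y (mset rest))" "\<not> R x y"
proof -
  obtain x y N where "mset L = add_mset x (add_mset y N)" "\<not> R x y" using assms unfolding pwl_pwm pwm_def by blast
  moreover obtain rest where "mset rest = N" using ex_mset by blast
  ultimately show ?thesis using that by blast
qed

lemma pwl_map: "pwl R L \<Longrightarrow> (\<And>a b. a \<in> set L \<Longrightarrow> b \<in> set L \<Longrightarrow> R a b \<Longrightarrow> R (f a) (f b)) \<Longrightarrow> pwl R (map f L)"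
  unfolding pwl_def by auto

end

lemma pwl_filter: "pwl R L \<Longrightarrow> (\<And>a b. R a b \<Longrightarrow> R b a) \<Longrightarrow> pwl R (filter P L)"
  by (induction L) (auto simp: pwl_Cons pwl_Nil)



abbreviation prodl where "prodl D L \<equiv> idprod_list D L"

lemma prodl_Nil: "idprod_list D [] = D" unfolding idprod_list_def by simp
lemma prodl_Cons: "idprod_list D (x # xs) = idprod x (idprod_list D xs)" unfolding idprod_list_def by simp

lemma prodl_remove1: "x \<in> set L \<Longrightarrow> idprod_list D L = idprod x (idprod_list D (remove1 x L))"
proof (induction L)
  case (Cons y ys)
  show ?case
  proof (cases "x = y")
    case True thus ?thesis by (simp add: prodl_Cons)
  next
    case False
    hence "x \<in> set ys" using Cons by simp
    hence "idprod_list D (y # ys) = idprod y (idprod x (idprod_list D (remove1 x ys)))"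
      using Cons by (simp add: prodl_Cons)
    also have "\<dots> = idprod x (idprod y (idprod_list D (remove1 x ys)))"
      by (metis idprod_assoc idprod_comm)
    finally show ?thesis using False by (simp add: prodl_Cons)
  qed
qed simp

lemma prodl_perm: "mset L = mset L' \<Longrightarrow> idprod_list D L = idprod_list D L'"
proof (induction L arbitrary: L')
  case Nil thus ?case by simp
next
  case (Cons x xs)
  hence x: "x \<in> set L'" by (metis list.set_intros(1) set_mset_mset)
  have "mset (remove1 x L') = mset L' - {#x#}" by simp
  also have "\<dots> = mset xs" using Cons.prems[symmetric] by simp
  finally have m: "mset xs = mset (remove1 x L')" ..
  show ?case using Cons.IH[OF m] prodl_remove1[OF x, of D] by (simp add: prodl_Cons)
qed

context SD begin

lemma frac_prodl: "(\<And>x. x \<in> set L \<Longrightarrow> frac_ideal D x) \<Longrightarrow> frac_ideal D (idprod_list D L)"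
  by (induction L) (auto simp: prodl_Nil prodl_Cons fD fprod)

lemma integral_prodl: "(\<And>x. x \<in> set L \<Longrightarrow> x \<subseteq> D) \<Longrightarrow> idprod_list D L \<subseteq> D"
  by (induction L) (simp_all add: prodl_Nil prodl_Cons integral_prod)

lemma st_prodl_map: "(\<And>x. x \<in> set L \<Longrightarrow> frac_ideal D x) \<Longrightarrow>
    st (idprod_list D (map st L)) = st (idprod_list D L)"
proof (induction L)
  case (Cons a L)
  have fa: "frac_ideal D a" using Cons by simp
  have f1: "frac_ideal D (idprod_list D (map st L))" using Cons.prems by (intro frac_prodl) (auto intro: st_frac)
  have f2: "frac_ideal D (idprod_list D L)" using Cons.prems by (intro frac_prodl) auto
  have "st (idprod_list D (map st (a # L))) = st (idprod (st a) (idprod_list D (map st L)))" by (simp add: prodl_Cons)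
  also have "\<dots> = st (idprod a (idprod_list D (map st L)))" by (rule st_prod_left[OF fa f1])
  also have "\<dots> = st (idprod a (st (idprod_list D (map st L))))" by (rule st_prod_right[OF fa f1, symmetric])
  also have "\<dots> = st (idprod a (st (idprod_list D L)))" using Cons by simp
  also have "\<dots> = st (idprod a (idprod_list D L))" by (rule st_prod_right[OF fa f2])
  finally show ?case by (simp add: prodl_Cons)
qed (simp add: prodl_Nil)

lemma comax_prodl:
  assumes J: "frac_ideal D J" "J \<subseteq> D"
    and L: "\<And>K. K \<in> set L \<Longrightarrow> frac_ideal D K \<and> K \<subseteq> D \<and> st (idsum J K) = D"
  shows "st (idsum J (idprod_list D L)) = D"
  using L
proof (induction L)
  case Nil
  have "idsum J D = D" using idsum_absorb[OF mdl_D[OF dom] J(2) frac_0[OF J(1)]] by (simp add: idsum_comm)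
  thus ?case by (simp add: prodl_Nil st_D)
next
  case (Cons K L)
  have K: "frac_ideal D K" "K \<subseteq> D" "st (idsum J K) = D" using Cons.prems by auto
  have R: "frac_ideal D (idprod_list D L)" "idprod_list D L \<subseteq> D"
    by (rule frac_prodl, use Cons.prems in simp) (rule integral_prodl, use Cons.prems in simp)
  have "st (idsum J (idprod_list D L)) = D" using Cons by simp
  thus ?case using comax_prod[OF J K(1,2) R K(3)] by (simp add: prodl_Cons)
qed

definition cmx where "cmx A B \<longleftrightarrow> st (idsum A B) = D"

lemma cmx_sym: "cmx A B \<Longrightarrow> cmx B A" unfolding cmx_def by (simp add: idsum_comm)

lemma pwl_cmx_Cons: "pwl cmx (x#xs) \<longleftrightarrow> (\<forall>y\<in>set xs. cmx x y) \<and> pwl cmx xs"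
  by (rule pwl_Cons) (rule cmx_sym)

lemma cmx_eq: "star_comaximal D st = cmx" unfolding cmx_def star_comaximal_def by (intro ext) simp

definition sid where "sid A \<longleftrightarrow> frac_ideal D A \<and> A \<subseteq> D \<and> st A = A"

lemma inter_prodl:
  assumes L: "\<And>K. K \<in> set L \<Longrightarrow> sid K \<and> I \<subseteq> K" and pw: "pwl cmx L" and I: "I \<subseteq> D"
  shows "I \<subseteq> st (idprod_list D L)"
  using L pw
proof (induction L)
  case Nil thus ?case using I st_D by (simp add: prodl_Nil)
next
  case (Cons P L)
  have P: "frac_ideal D P" "P \<subseteq> D" "st P = P" "I \<subseteq> P" using Cons.prems unfolding sid_def by auto
  have pwc: "\<forall>y\<in>set L. cmx P y" "pwl cmx L" using Cons.prems(2) unfolding pwl_cmx_Cons by blast+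
  have R: "frac_ideal D (idprod_list D L)" "idprod_list D L \<subseteq> D"
    by (rule frac_prodl, use Cons.prems in \<open>simp add: sid_def\<close>)
       (rule integral_prodl, use Cons.prems in \<open>simp add: sid_def\<close>)
  have IH: "I \<subseteq> st (idprod_list D L)" using Cons pwc by auto
  have c: "st (idsum P (idprod_list D L)) = D"
    using P pwc Cons.prems(1) by (intro comax_prodl) (auto simp: sid_def cmx_def)
  have c2: "st (idsum P (st (idprod_list D L))) = D" using c st_sum_right[OF P(1) R(1)] by simp
  have "I \<subseteq> P \<inter> st (idprod_list D L)" using IH P by blast
  also have "\<dots> \<subseteq> st (idprod P (st (idprod_list D L)))"
    by (rule inter_sub[OF P(1,2) st_frac[OF R(1)] st_integral[OF R] c2])
  also have "\<dots> = st (idprod P (idprod_list D L))" by (rule st_prod_right[OF P(1) R(1)])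
  finally show ?case by (simp add: prodl_Cons)
qed

end


context SD begin

lemma ft_sum: assumes "finite_type D st A" "finite_type D st B"
  shows "finite_type D st (st (idsum A B))"
proof -
  obtain A0 where A0: "frac_ideal D A0" "fin_gen D A0" "A = st A0" using assms(1) unfolding finite_type_def by blast
  obtain B0 where B0: "frac_ideal D B0" "fin_gen D B0" "B = st B0" using assms(2) unfolding finite_type_def by blast
  obtain S where S: "finite S" "A0 = gen D S" using A0(2) unfolding fin_gen_def by blast
  obtain T where T: "finite T" "B0 = gen D T" using B0(2) unfolding fin_gen_def by blast
  have "st (idsum A B) = st (idsum A0 B0)" unfolding A0(3) B0(3) by (rule st_sum_both[OF A0(1) B0(1)])
  moreover have "fin_gen D (idsum A0 B0)" unfolding fin_gen_def using gen_union[OF dom S(1) T(1)] S T by blast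
  ultimately show ?thesis unfolding finite_type_def using fsum[OF A0(1) B0(1)] by (intro exI[of _ "idsum A0 B0"]) simp
qed

lemma ft_prod: assumes "finite_type D st A" "finite_type D st B"
  shows "finite_type D st (st (idprod A B))"
proof -
  obtain A0 where A0: "frac_ideal D A0" "fin_gen D A0" "A = st A0" using assms(1) unfolding finite_type_def by blast
  obtain B0 where B0: "frac_ideal D B0" "fin_gen D B0" "B = st B0" using assms(2) unfolding finite_type_def by blast
  obtain S where S: "finite S" "A0 = gen D S" using A0(2) unfolding fin_gen_def by blast
  obtain T where T: "finite T" "B0 = gen D T" using B0(2) unfolding fin_gen_def by blast
  have "st (idprod A B) = st (idprod A0 B0)" unfolding A0(3) B0(3) by (rule st_prod_both[OF A0(1) B0(1)])
  moreover have "fin_gen D (idprod A0 B0)"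
  proof -
    have f: "finite ((\<lambda>(s,t). s*t) ` (S \<times> T))" using S(1) T(1) by simp
    have e: "idprod A0 B0 = gen D ((\<lambda>(s,t). s*t) ` (S \<times> T))" using gen_prod[OF dom S(1) T(1)] S(2) T(2) by simp
    show ?thesis unfolding fin_gen_def using f e by blast
  qed
  ultimately show ?thesis unfolding finite_type_def using fprod[OF A0(1) B0(1)] by (intro exI[of _ "idprod A0 B0"]) simp
qed

lemma pift_D: "pift D st A \<Longrightarrow> frac_ideal D A \<and> A \<subseteq> D \<and> st A = A \<and> A \<noteq> D \<and> finite_type D st A"
  unfolding pift_def star_ideal_def by blast

lemma pift_frac: "pift D st A \<Longrightarrow> frac_ideal D A" unfolding pift_def star_ideal_def by blast
lemma pift_int: "pift D st A \<Longrightarrow> A \<subseteq> D" unfolding pift_def by blast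
lemma pift_st: "pift D st A \<Longrightarrow> st A = A" unfolding pift_def star_ideal_def by blast
lemma pift_ne: "pift D st A \<Longrightarrow> A \<noteq> D" unfolding pift_def by blast
lemma pift_ft: "pift D st A \<Longrightarrow> finite_type D st A" unfolding pift_def by blast
lemma piftI: "frac_ideal D A \<Longrightarrow> A \<subseteq> D \<Longrightarrow> st A = A \<Longrightarrow> A \<noteq> D \<Longrightarrow> finite_type D st A \<Longrightarrow> pift D st A"
  unfolding pift_def star_ideal_def by blast

lemma pift_sum: assumes A: "pift D st A" and B: "pift D st B" and n: "st (idsum A B) \<noteq> D"
  shows "pift D st (st (idsum A B))"
proof -
  have f: "frac_ideal D (idsum A B)" using fsum[OF pift_frac[OF A] pift_frac[OF B]] .
  have i: "idsum A B \<subseteq> D" using integral_sum[OF pift_int[OF A] pift_int[OF B]] .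
  show ?thesis
    by (rule piftI[OF st_frac[OF f] st_integral[OF f i] st_idem[OF f] n ft_sum[OF pift_ft[OF A] pift_ft[OF B]]])
qed

lemma sum_sub1: assumes "frac_ideal D A" "frac_ideal D B" shows "A \<subseteq> st (idsum A B)"
  using idsum_sub1[OF frac_mdl[OF assms(2)], of A] st_ext[OF fsum[OF assms]] by (rule order.trans)
lemma sum_sub2: assumes "frac_ideal D A" "frac_ideal D B" shows "B \<subseteq> st (idsum A B)"
  using idsum_sub2[OF frac_mdl[OF assms(1)], of B] st_ext[OF fsum[OF assms]] by (rule order.trans)

lemma homog_no: "star_homog D st J \<Longrightarrow> pift D st A \<Longrightarrow> pift D st B \<Longrightarrow> J \<subseteq> A \<Longrightarrow> J \<subseteq> B \<Longrightarrow> st (idsum A B) \<noteq> D"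
  unfolding star_homog_def by blast

lemma homog_pift: "star_homog D st J \<Longrightarrow> pift D st J" unfolding star_homog_def by blast

lemma homog_super: assumes J: "star_homog D st J" and A: "pift D st A" and JA: "J \<subseteq> A"
  shows "star_homog D st A"
  unfolding star_homog_def
proof (intro conjI allI impI)
  fix X Y assume h: "pift D st X \<and> pift D st Y \<and> A \<subseteq> X \<and> A \<subseteq> Y"
  hence "J \<subseteq> X" "J \<subseteq> Y" using JA by auto
  thus "st (idsum X Y) \<noteq> D" using J h unfolding star_homog_def by blast
qed (rule A)

lemma homog_two:
  assumes J: "star_homog D st J" and Ka: "pift D st Ka" and Kb: "pift D st Kb"
    and c: "st (idsum Ka Kb) = D"
  shows "st (idsum J Ka) = D \<or> st (idsum J Kb) = D"
proof (rule ccontr)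
  assume h: "\<not> (st (idsum J Ka) = D \<or> st (idsum J Kb) = D)"
  have PJ: "pift D st J" using J by (rule homog_pift)
  have Pa: "pift D st (st (idsum J Ka))" using pift_sum[OF PJ Ka] h by blast
  have Pb: "pift D st (st (idsum J Kb))" using pift_sum[OF PJ Kb] h by blast
  have fJ: "frac_ideal D J" and fa: "frac_ideal D Ka" and fb: "frac_ideal D Kb"
    using pift_frac[OF PJ] pift_frac[OF Ka] pift_frac[OF Kb] .
  have "J \<subseteq> st (idsum J Ka)" "J \<subseteq> st (idsum J Kb)" using sum_sub1[OF fJ fa] sum_sub1[OF fJ fb] .
  hence n: "st (idsum (st (idsum J Ka)) (st (idsum J Kb))) \<noteq> D" using homog_no[OF J Pa Pb] by blast
  have "st (idsum (st (idsum J Ka)) (st (idsum J Kb))) = D"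
    by (rule comax_mono[OF fa fb pift_frac[OF Pa] pift_frac[OF Pb] sum_sub2[OF fJ fa] sum_sub2[OF fJ fb] pift_int[OF Pa] pift_int[OF Pb] c])
  thus False using n by simp
qed

lemma homog_mixed:
  assumes Ha: "star_homog D st Ha" and Hb: "star_homog D st Hb" and n: "st (idsum Ha Hb) \<noteq> D"
    and X: "pift D st X" "Ha \<subseteq> X" and Y: "pift D st Y" "Hb \<subseteq> Y"
  shows "st (idsum X Y) \<noteq> D"
proof
  assume c: "st (idsum X Y) = D"
  have PA: "pift D st Ha" "pift D st Hb" using Ha Hb homog_pift by blast+
  have fa: "frac_ideal D Ha" and fb: "frac_ideal D Hb" using pift_frac[OF PA(1)] pift_frac[OF PA(2)] .
  have fX: "frac_ideal D X" "X \<subseteq> D" and fY: "frac_ideal D Y" "Y \<subseteq> D"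
    using pift_frac[OF X(1)] pift_int[OF X(1)] pift_frac[OF Y(1)] pift_int[OF Y(1)] .
  define C where "C = st (idsum Ha Hb)"
  have PC: "pift D st C" unfolding C_def using pift_sum[OF PA n] .
  have aC: "Ha \<subseteq> C" and bC: "Hb \<subseteq> C" unfolding C_def using sum_sub1[OF fa fb] sum_sub2[OF fa fb] by auto
  have fC: "frac_ideal D C" using pift_frac[OF PC] .
  have n2: "st (idsum X C) \<noteq> D" using homog_no[OF Ha X(1) PC X(2) aC] .
  define E where "E = st (idsum X C)"
  have PE: "pift D st E" unfolding E_def using pift_sum[OF X(1) PC n2] .
  have XE: "X \<subseteq> E" and CE: "C \<subseteq> E" unfolding E_def using sum_sub1[OF fX(1) fC] sum_sub2[OF fX(1) fC] by auto
  have n3: "st (idsum E Y) \<noteq> D" using homog_no[OF Hb PE Y(1) order.trans[OF bC CE] Y(2)] .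
  have "st (idsum E Y) = D"
    by (rule comax_mono[OF fX(1) fY(1) pift_frac[OF PE] fY(1) XE order_refl pift_int[OF PE] fY(2) c])
  thus False using n3 by simp
qed

lemma homog_merge:
  assumes Ha: "star_homog D st Ha" and Hb: "star_homog D st Hb" and n: "st (idsum Ha Hb) \<noteq> D"
  shows "star_homog D st (st (idprod Ha Hb))"
proof -
  have PA: "pift D st Ha" "pift D st Hb" using Ha Hb homog_pift by blast+
  have fa: "frac_ideal D Ha" "Ha \<subseteq> D" "st Ha = Ha" "Ha \<noteq> D"
    using pift_frac[OF PA(1)] pift_int[OF PA(1)] pift_st[OF PA(1)] pift_ne[OF PA(1)] .
  have fb: "frac_ideal D Hb" "Hb \<subseteq> D" "st Hb = Hb"
    using pift_frac[OF PA(2)] pift_int[OF PA(2)] pift_st[OF PA(2)] .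
  define P where "P = st (idprod Ha Hb)"
  have fP: "frac_ideal D P" unfolding P_def using st_frac[OF fprod[OF fa(1) fb(1)]] .
  have PHa: "P \<subseteq> Ha"
  proof -
    have "P \<subseteq> st (idprod Ha D)" unfolding P_def
      by (rule st_mono[OF fprod[OF fa(1) fb(1)] fprod[OF fa(1) fD] idprod_mono[OF order_refl fb(2)]])
    also have "\<dots> = Ha" using idprod_D_right[OF dom frac_mdl[OF fa(1)]] fa(3) by simp
    finally show ?thesis .
  qed
  have prodP: "idprod Hb Ha \<subseteq> P" unfolding P_def using st_ext[OF fprod[OF fa(1) fb(1)]] idprod_comm by blast
  have pP: "pift D st P"
    unfolding pift_def star_ideal_def
  proof (intro conjI)
    show "frac_ideal D P" by (rule fP)
    show "st P = P" unfolding P_def by (rule st_idem[OF fprod[OF fa(1) fb(1)]])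
    show "P \<subseteq> D" using PHa fa(2) by blast
    show "P \<noteq> D" using PHa fa(2) fa(4) by blast
    show "finite_type D st P" unfolding P_def by (rule ft_prod[OF pift_ft[OF PA(1)] pift_ft[OF PA(2)]])
  qed
  have ext: "\<exists>A'. pift D st A' \<and> A \<subseteq> A' \<and> (Ha \<subseteq> A' \<or> Hb \<subseteq> A')" if A: "pift D st A" "P \<subseteq> A" for A
  proof (cases "st (idsum A Ha) = D")
    case True
    have fA: "frac_ideal D A" "A \<subseteq> D" "st A = A" using pift_frac[OF A(1)] pift_int[OF A(1)] pift_st[OF A(1)] .
    have "Hb \<subseteq> A" using cancel[OF fA fb(1,2) fa(1,2) order.trans[OF prodP A(2)] True] .
    thus ?thesis using A by (intro exI[of _ A]) simp
  next
    case False
    have fA: "frac_ideal D A" using pift_frac[OF A(1)] .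
    show ?thesis using pift_sum[OF A(1) PA(1) False] sum_sub1[OF fA fa(1)] sum_sub2[OF fA fa(1)]
      by (intro exI[of _ "st (idsum A Ha)"]) simp
  qed
  show ?thesis unfolding star_homog_def P_def[symmetric]
  proof (intro conjI allI impI)
    show "pift D st P" by (rule pP)
    fix A B assume AB: "pift D st A \<and> pift D st B \<and> P \<subseteq> A \<and> P \<subseteq> B"
    show "st (idsum A B) \<noteq> D"
    proof
      assume c: "st (idsum A B) = D"
      have AB': "pift D st A" "P \<subseteq> A" "pift D st B" "P \<subseteq> B" using AB by auto
      obtain A' where A': "pift D st A'" "A \<subseteq> A'" "Ha \<subseteq> A' \<or> Hb \<subseteq> A'" using ext[OF AB'(1,2)] by blast
      obtain B' where B': "pift D st B'" "B \<subseteq> B'" "Ha \<subseteq> B' \<or> Hb \<subseteq> B'" using ext[OF AB'(3,4)] by blast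
      have fA: "frac_ideal D A" "frac_ideal D B" using pift_frac[OF AB'(1)] pift_frac[OF AB'(3)] .
      have c': "st (idsum A' B') = D"
        by (rule comax_mono[OF fA pift_frac[OF A'(1)] pift_frac[OF B'(1)] A'(2) B'(2) pift_int[OF A'(1)] pift_int[OF B'(1)] c])
      have n': "st (idsum Hb Ha) \<noteq> D" using n by (simp add: idsum_comm)
      show False
      proof (cases "Ha \<subseteq> A'")
        case True
        show False
        proof (cases "Ha \<subseteq> B'")
          case True thus False using homog_no[OF Ha A'(1) B'(1) \<open>Ha \<subseteq> A'\<close>] c' by blast
        next
          case False
          hence "Hb \<subseteq> B'" using B'(3) by blast
          thus False using homog_mixed[OF Ha Hb n A'(1) \<open>Ha \<subseteq> A'\<close> B'(1)] c' by blast
        qed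
      next
        case False
        hence hbA: "Hb \<subseteq> A'" using A'(3) by blast
        show False
        proof (cases "Hb \<subseteq> B'")
          case True thus False using homog_no[OF Hb A'(1) B'(1) hbA] c' by blast
        next
          case False
          hence "Ha \<subseteq> B'" using B'(3) by blast
          thus False using homog_mixed[OF Hb Ha n' A'(1) hbA B'(1)] c' by blast
        qed
      qed
    qed
  qed
qed

end


context SD begin

lemma merge:
  "(\<And>H. H \<in> set Hs \<Longrightarrow> star_homog D st H) \<Longrightarrow>
   \<exists>Ks. (\<forall>K\<in>set Ks. star_homog D st K) \<and> pwl cmx Ks \<and> st (idprod_list D Ks) = st (idprod_list D Hs)"
proof (induction "length Hs" arbitrary: Hs rule: less_induct)
  case less
  show ?case
  proof (cases "pwl cmx Hs")
    case True thus ?thesis using less.prems by blast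
  next
    case False
    obtain x y rest where e: "mset Hs = add_mset x (add_mset y (mset rest))" and n: "\<not> cmx x y"
      using not_pwl[of cmx, OF cmx_sym False] by blast
    have xy: "x \<in> set Hs" "y \<in> set Hs" using e by (metis add_mset_commute set_mset_mset union_single_eq_member)+
    have rs: "\<And>z. z \<in> set rest \<Longrightarrow> z \<in> set Hs" using e by (metis in_multiset_in_set set_mset_mset union_iff add_mset_add_single)
    have hx: "star_homog D st x" and hy: "star_homog D st y" using xy less.prems by auto
    have fx: "frac_ideal D x" and fy: "frac_ideal D y" using pift_frac[OF homog_pift[OF hx]] pift_frac[OF homog_pift[OF hy]] .
    have nxy: "st (idsum x y) \<noteq> D" using n unfolding cmx_def .
    define New where "New = st (idprod x y) # rest"
    have len: "length New < length Hs" unfolding New_def using arg_cong[OF e, of size] by simp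
    have hN: "\<And>H. H \<in> set New \<Longrightarrow> star_homog D st H"
      unfolding New_def using homog_merge[OF hx hy nxy] rs less.prems by auto
    have fr: "frac_ideal D (idprod_list D rest)"
      by (rule frac_prodl) (use rs less.prems homog_pift pift_frac in blast)
    have "st (idprod_list D New) = st (idprod (st (idprod x y)) (idprod_list D rest))"
      unfolding New_def by (simp add: prodl_Cons)
    also have "\<dots> = st (idprod (idprod x y) (idprod_list D rest))" by (rule st_prod_left[OF fprod[OF fx fy] fr])
    also have "\<dots> = st (idprod_list D (x # y # rest))" by (simp add: prodl_Cons idprod_assoc)
    also have "\<dots> = st (idprod_list D Hs)" using prodl_perm[of "x # y # rest" Hs D] e by simp
    finally have eq: "st (idprod_list D New) = st (idprod_list D Hs)" .
    obtain Ks where "\<forall>K\<in>set Ks. star_homog D st K" "pwl cmx Ks" "st (idprod_list D Ks) = st (idprod_list D New)"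
      using less.hyps[OF len hN] by blast
    thus ?thesis using eq by auto
  qed
qed

lemma inv_ft:
  assumes fc: "finite_character D st" and inv: "star_invertible D st I" and ID: "I \<subseteq> D" and sI: "st I = I"
  shows "finite_type D st I"
proof -
  have fI: "frac_ideal D I" using inv unfolding star_invertible_def by blast
  have MI: "mdl D I" using frac_mdl[OF fI] .
  define Iv where "Iv = idinv D I"
  have ivm: "x \<in> Iv \<longleftrightarrow> (\<forall>y\<in>I. x * y \<in> D)" for x unfolding Iv_def idinv_def by simp
  obtain a where a: "a \<in> I" "a \<noteq> 0" using fI by (rule frac_nz)
  have aD: "a \<in> D" using a ID by blast
  have mIv: "mdl D Iv"
  proof (rule mdlI)
    show "0 \<in> Iv" unfolding ivm using dom_facts[OF dom] by simp
    fix x y assume "x \<in> Iv" "y \<in> Iv"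
    thus "x + y \<in> Iv" unfolding ivm using dom_facts(3)[OF dom] by (simp add: distrib_right)
  next
    fix d x assume "d \<in> D" "x \<in> Iv"
    thus "d * x \<in> Iv" unfolding ivm using dom_facts(4)[OF dom] by (simp add: mult.assoc)
  qed
  have oneIv: "1 \<in> Iv" unfolding ivm using ID by auto
  have fIv: "frac_ideal D Iv" unfolding frac_iff
  proof (intro conjI)
    show "mdl D Iv" by (rule mIv)
    show "Iv \<noteq> {0}" using oneIv by auto
    have "\<forall>x\<in>Iv. a * x \<in> D"
    proof
      fix x assume "x \<in> Iv"
      hence "x * a \<in> D" using a(1) unfolding ivm by blast
      thus "a * x \<in> D" by (simp add: mult.commute)
    qed
    thus "\<exists>d\<in>D. d \<noteq> 0 \<and> (\<forall>x\<in>Iv. d * x \<in> D)" using aD a(2) by blast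
  qed
  have PD: "idprod I Iv \<subseteq> D"
  proof (rule idprod_least_mdl[OF mdl_D[OF dom]])
    fix x y assume "x \<in> I" "y \<in> Iv" thus "x * y \<in> D" unfolding ivm by (simp add: mult.commute)
  qed
  have fP: "frac_ideal D (idprod I Iv)" by (rule fprod[OF fI fIv])
  have "st (idprod I Iv) = D" using inv unfolding star_invertible_def Iv_def by blast
  moreover have "st (idprod I Iv) = \<Union>{st J | J. frac_ideal D J \<and> fin_gen D J \<and> J \<subseteq> idprod I Iv}"
    using fc fP unfolding finite_character_def by blast
  ultimately have "1 \<in> \<Union>{st J | J. frac_ideal D J \<and> fin_gen D J \<and> J \<subseteq> idprod I Iv}"
    using dom_facts(2)[OF dom] by simp
  then obtain J where J: "frac_ideal D J" "fin_gen D J" "J \<subseteq> idprod I Iv" "1 \<in> st J" by blast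
  obtain S where S: "finite S" "J = gen D S" using J(2) unfolding fin_gen_def by blast
  have loc: "\<exists>F. finite F \<and> F \<subseteq> I \<and> u \<in> idprod (gen D F) Iv" if "u \<in> idprod I Iv" for u
    using that
  proof (induction rule: idprod_induct)
    case 1 show ?case by (intro exI[of _ "{}"]) (simp add: idprod_zero)
  next
    case (2 a b)
    have "a \<in> gen D {a}" by (rule gen_mem[OF dom]) auto
    hence "a * b \<in> idprod (gen D {a}) Iv" using 2 by (simp add: idprod_mem)
    thus ?case using 2 by (intro exI[of _ "{a}"]) auto
  next
    case (3 x y)
    then obtain F1 F2 where F: "finite F1" "F1 \<subseteq> I" "x \<in> idprod (gen D F1) Iv"
      "finite F2" "F2 \<subseteq> I" "y \<in> idprod (gen D F2) Iv" by blast
    have fu: "finite (F1 \<union> F2)" using F by simp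
    have "F1 \<subseteq> gen D (F1 \<union> F2)" "F2 \<subseteq> gen D (F1 \<union> F2)" using gen_mem[OF dom fu] by blast+
    hence g1: "gen D F1 \<subseteq> gen D (F1 \<union> F2)" "gen D F2 \<subseteq> gen D (F1 \<union> F2)"
      using gen_least[OF dom gen_mdl[OF dom]] by blast+
    have "x \<in> idprod (gen D (F1 \<union> F2)) Iv" "y \<in> idprod (gen D (F1 \<union> F2)) Iv"
      using F(3,6) idprod_mono[OF g1(1) order_refl] idprod_mono[OF g1(2) order_refl] by blast+
    hence "x + y \<in> idprod (gen D (F1 \<union> F2)) Iv" by (rule idprod_add)
    thus ?case using F by (intro exI[of _ "F1 \<union> F2"]) auto
  qed
  have "\<forall>s\<in>S. \<exists>F. finite F \<and> F \<subseteq> I \<and> s \<in> idprod (gen D F) Iv"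
  proof
    fix s assume "s \<in> S"
    hence "s \<in> J" unfolding S(2) using gen_mem[OF dom S(1)] by blast
    thus "\<exists>F. finite F \<and> F \<subseteq> I \<and> s \<in> idprod (gen D F) Iv" using J(3) loc by blast
  qed
  from bchoice[OF this] obtain F where F: "\<forall>s\<in>S. finite (F s) \<and> F s \<subseteq> I \<and> s \<in> idprod (gen D (F s)) Iv"
    by blast
  define F0 where "F0 = \<Union>(F ` S)"
  have F0: "finite F0" "F0 \<subseteq> I" unfolding F0_def using F S(1) by auto
  define I0 where "I0 = gen D F0"
  have mI0: "mdl D I0" unfolding I0_def by (rule gen_mdl[OF dom])
  have I0I: "I0 \<subseteq> I" unfolding I0_def by (rule gen_least[OF dom MI F0(2)])
  have JQ: "J \<subseteq> idprod I0 Iv" unfolding S(2)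
  proof (rule gen_least[OF dom mdl_idprod[OF mI0]])
    show "S \<subseteq> idprod I0 Iv"
    proof
      fix s assume s: "s \<in> S"
      have "F s \<subseteq> F0" unfolding F0_def using s by blast
      hence "F s \<subseteq> I0" unfolding I0_def using gen_mem[OF dom F0(1)] by blast
      hence "gen D (F s) \<subseteq> I0" by (rule gen_least[OF dom mI0])
      hence "idprod (gen D (F s)) Iv \<subseteq> idprod I0 Iv" by (rule idprod_mono[OF _ order_refl])
      thus "s \<in> idprod I0 Iv" using F s by blast
    qed
  qed
  have I0nz: "I0 \<noteq> {0}"
  proof
    assume h: "I0 = {0}"
    have "idprod I0 Iv \<subseteq> {0}" unfolding h by (rule idprod_least) auto
    hence "J \<subseteq> {0}" using JQ by blast
    thus False using J(1) frac_0[OF J(1)] unfolding frac_iff by blast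
  qed
  have fI0: "frac_ideal D I0" by (rule frac_integral[OF dom mI0 order.trans[OF I0I ID] I0nz])
  have fQ: "frac_ideal D (idprod I0 Iv)" by (rule fprod[OF fI0 fIv])
  have "1 \<in> st (idprod I0 Iv)" using st_mono[OF J(1) fQ JQ] J(4) by blast
  hence DQ: "D \<subseteq> st (idprod I0 Iv)" using mdl_mult[OF st_mdl[OF fQ]] by (metis mult_1_right subsetI)
  have "I = idprod I D" using idprod_D_right[OF dom MI] by simp
  also have "\<dots> \<subseteq> idprod I (st (idprod I0 Iv))" by (rule idprod_mono[OF order_refl DQ])
  also have "\<dots> \<subseteq> st (idprod I (st (idprod I0 Iv)))" by (rule st_ext[OF fprod[OF fI st_frac[OF fQ]]])
  also have "\<dots> = st (idprod I (idprod I0 Iv))" by (rule st_prod_right[OF fI fQ])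
  finally have s1: "I \<subseteq> st (idprod I (idprod I0 Iv))" .
  have "idprod I (idprod I0 Iv) = idprod I0 (idprod I Iv)" by (metis idprod_assoc idprod_comm)
  also have "\<dots> \<subseteq> idprod I0 D" by (rule idprod_mono[OF order_refl PD])
  also have "\<dots> = I0" by (rule idprod_D_right[OF dom mI0])
  finally have s2: "idprod I (idprod I0 Iv) \<subseteq> I0" .
  have "I \<subseteq> st I0" using s1 st_mono[OF fprod[OF fI fQ] fI0 s2] by blast
  moreover have "st I0 \<subseteq> I" using st_mono[OF fI0 fI I0I] sI by simp
  ultimately have "I = st I0" by blast
  moreover have "fin_gen D I0" unfolding I0_def fin_gen_def using F0(1) by blast
  ultimately show ?thesis unfolding finite_type_def using fI0 by blast
qed

end


context SD begin

lemma mdl_prodl: "(\<And>x. x \<in> set L \<Longrightarrow> mdl D x) \<Longrightarrow> mdl D (idprod_list D L)"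
  by (induction L) (simp_all add: prodl_Nil prodl_Cons mdl_D[OF dom] mdl_idprod)

lemma prodl_filter_D: "(\<And>x. x \<in> set L \<Longrightarrow> mdl D x) \<Longrightarrow> idprod_list D (filter (\<lambda>P. P \<noteq> D) L) = idprod_list D L"
proof (induction L)
  case (Cons a L)
  have m: "mdl D (idprod_list D L)" using Cons.prems by (intro mdl_prodl) simp
  show ?case
  proof (cases "a = D")
    case True thus ?thesis using Cons idprod_D_left[OF dom m] by (simp add: prodl_Cons)
  next
    case False thus ?thesis using Cons by (simp add: prodl_Cons)
  qed
qed simp

lemma sum_prod_sub:
  assumes MJ: "mdl D J" "J \<subseteq> D" and A: "mdl D A" "A \<subseteq> D" and B: "B \<subseteq> D"
  shows "idprod (idsum J A) (idsum J B) \<subseteq> idsum J (idprod A B)"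
proof (rule idprod_least_mdl[OF mdl_idsum[OF MJ(1) mdl_idprod[OF A(1)]]])
  fix u v assume "u \<in> idsum J A" "v \<in> idsum J B"
  then obtain j a j' b where u: "u = j + a" "j \<in> J" "a \<in> A" and v: "v = j' + b" "j' \<in> J" "b \<in> B"
    unfolding idsum_def by blast
  have "v \<in> D" using v MJ(2) B dom_facts(3)[OF dom, of j' b] by blast
  hence "v * j \<in> J" using u MJ(1) by (simp add: mdl_mult)
  moreover have "a * j' \<in> J" using u v A MJ(1) by (auto intro: mdl_mult)
  ultimately have "j * v + a * j' \<in> J" using MJ(1) by (simp add: mdl_add mult.commute)
  moreover have "a * b \<in> idprod A B" using u v by (simp add: idprod_mem)
  moreover have "u * v = (j * v + a * j') + a * b" unfolding u v by (simp add: algebra_simps)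
  ultimately show "u * v \<in> idsum J (idprod A B)" unfolding idsum_def mem_Collect_eq by metis
qed

lemma prodl_sum_sub:
  assumes I: "mdl D I" "I \<subseteq> D" and K: "\<And>K. K \<in> set Ks \<Longrightarrow> mdl D K \<and> K \<subseteq> D"
  shows "idprod_list D (map (idsum I) Ks) \<subseteq> idsum I (idprod_list D Ks)"
  using K
proof (induction Ks)
  case Nil thus ?case using idsum_sub2[OF I(1)] by (simp add: prodl_Nil)
next
  case (Cons K Ks)
  have k: "mdl D K" "K \<subseteq> D" using Cons.prems by auto
  have r: "idprod_list D Ks \<subseteq> D" by (rule integral_prodl) (use Cons.prems in simp)
  have "idprod_list D (map (idsum I) (K # Ks)) = idprod (idsum I K) (idprod_list D (map (idsum I) Ks))"
    by (simp add: prodl_Cons)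
  also have "\<dots> \<subseteq> idprod (idsum I K) (idsum I (idprod_list D Ks))"
    using Cons by (intro idprod_mono order_refl) simp
  also have "\<dots> \<subseteq> idsum I (idprod K (idprod_list D Ks))" by (rule sum_prod_sub[OF I k r])
  finally show ?case by (simp add: prodl_Cons)
qed

lemma existence:
  assumes fc: "finite_character D st" and SH: "star_SH D st"
    and sI: "star_ideal D st I" and ID: "I \<subseteq> D" and IneD: "I \<noteq> D" and inv: "star_invertible D st I"
  shows "\<exists>Is. (\<forall>J\<in>set Is. star_homog D st J) \<and> pwl cmx Is \<and> I = st (idprod_list D Is)"
proof -
  have fI: "frac_ideal D I" and stI: "st I = I" using sI unfolding star_ideal_def by blast+
  have MI: "mdl D I" by (rule frac_mdl[OF fI])
  have ftI: "finite_type D st I" by (rule inv_ft[OF fc inv ID stI])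
  have pI: "pift D st I" by (rule piftI[OF fI ID stI IneD ftI])
  obtain x where x: "x \<in> I" "x \<noteq> 0" using fI by (rule frac_nz)
  have xD: "x \<in> D" using x ID by blast
  have ninv: "inverse x \<notin> D"
  proof
    assume "inverse x \<in> D"
    hence "inverse x * x \<in> I" using mdl_mult[OF MI _ x(1)] by blast
    hence one: "1 \<in> I" using x(2) by simp
    have "D \<subseteq> I"
    proof
      fix d assume "d \<in> D" thus "d \<in> I" using mdl_mult[OF MI _ one] by simp
    qed
    thus False using ID IneD by blast
  qed
  obtain Hs where Hs: "\<forall>J\<in>set Hs. star_homog D st J" "principal D x = st (idprod_list D Hs)"
    using SH xD x(2) ninv unfolding star_SH_def by blast
  obtain Ks where Ks: "\<forall>K\<in>set Ks. star_homog D st K" "pwl cmx Ks" "st (idprod_list D Ks) = st (idprod_list D Hs)"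
    using merge[of Hs] Hs(1) by blast
  have pK: "pift D st K" if "K \<in> set Ks" for K using Ks(1) that homog_pift by blast
  define f where "f K = st (idsum I K)" for K
  define Ps where "Ps = filter (\<lambda>P. P \<noteq> D) (map f Ks)"
  have fK: "frac_ideal D (idsum I K)" if "K \<in> set Ks" for K using fsum[OF fI pift_frac[OF pK[OF that]]] .
  have iK: "idsum I K \<subseteq> D" if "K \<in> set Ks" for K using integral_sum[OF ID pift_int[OF pK[OF that]]] .
  have homP: "star_homog D st P" if hP: "P \<in> set Ps" for P
  proof -
    obtain K where K: "K \<in> set Ks" "P = f K" "P \<noteq> D" using hP unfolding Ps_def by auto
    have pP: "pift D st P" unfolding K(2) f_def using pift_sum[OF pI pK[OF K(1)]] K(3) unfolding f_def K(2) by blast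
    have "K \<subseteq> P" unfolding K(2) f_def by (rule sum_sub2[OF fI pift_frac[OF pK[OF K(1)]]])
    thus ?thesis using homog_super[OF Ks(1)[rule_format, OF K(1)] pP] by blast
  qed
  have pwP: "pwl cmx Ps" unfolding Ps_def
  proof (rule pwl_filter[OF _ cmx_sym])
    show "pwl cmx (map f Ks)"
    proof (rule pwl_map[of cmx, OF cmx_sym Ks(2)])
      fix a b assume ab: "a \<in> set Ks" "b \<in> set Ks" "cmx a b"
      show "cmx (f a) (f b)" unfolding cmx_def f_def
        using comax_mono[OF pift_frac[OF pK[OF ab(1)]] pift_frac[OF pK[OF ab(2)]] st_frac[OF fK[OF ab(1)]] st_frac[OF fK[OF ab(2)]]
            sum_sub2[OF fI pift_frac[OF pK[OF ab(1)]]] sum_sub2[OF fI pift_frac[OF pK[OF ab(2)]]]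
            st_integral[OF fK[OF ab(1)] iK[OF ab(1)]] st_integral[OF fK[OF ab(2)] iK[OF ab(2)]]]
          ab(3) unfolding cmx_def by blast
    qed
  qed
  have setP: "P \<in> set Ps \<Longrightarrow> sid P \<and> I \<subseteq> P" for P
  proof -
    assume "P \<in> set Ps"
    then obtain K where K: "K \<in> set Ks" "P = f K" unfolding Ps_def by auto
    show "sid P \<and> I \<subseteq> P" unfolding sid_def K(2) f_def
      using st_frac[OF fK[OF K(1)]] st_integral[OF fK[OF K(1)] iK[OF K(1)]] st_idem[OF fK[OF K(1)]]
        sum_sub1[OF fI pift_frac[OF pK[OF K(1)]]] by blast
  qed
  have ge: "I \<subseteq> st (idprod_list D Ps)" by (rule inter_prodl[OF setP pwP ID])
  have fmap: "frac_ideal D y" if "y \<in> set (map (idsum I) Ks)" for y using that fK by auto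
  have "idprod_list D Ps = idprod_list D (map f Ks)" unfolding Ps_def
    by (rule prodl_filter_D) (use fK in \<open>auto simp: f_def intro: st_mdl\<close>)
  also have "\<dots> = idprod_list D (map st (map (idsum I) Ks))" unfolding f_def by (simp add: comp_def)
  finally have e: "idprod_list D Ps = idprod_list D (map st (map (idsum I) Ks))" .
  have "st (idprod_list D Ps) = st (idprod_list D (map (idsum I) Ks))"
    unfolding e by (rule st_prodl_map[of "map (idsum I) Ks", OF fmap])
  also have "\<dots> \<subseteq> st (idsum I (idprod_list D Ks))"
  proof (rule st_mono)
    show "frac_ideal D (idprod_list D (map (idsum I) Ks))" by (rule frac_prodl[OF fmap])
    have fk: "frac_ideal D (idprod_list D Ks)" by (rule frac_prodl) (use pK pift_frac in blast)
    show "frac_ideal D (idsum I (idprod_list D Ks))" by (rule fsum[OF fI fk])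
    show "idprod_list D (map (idsum I) Ks) \<subseteq> idsum I (idprod_list D Ks)"
      by (rule prodl_sum_sub[OF MI ID]) (use pK pift_frac pift_int frac_mdl in blast)
  qed
  also have "\<dots> = st (idsum I (st (idprod_list D Ks)))"
    by (rule st_sum_right[symmetric, OF fI]) (rule frac_prodl, use pK pift_frac in blast)
  also have "\<dots> = st (idsum I (principal D x))" using Ks(3) Hs(2) by simp
  also have "idsum I (principal D x) = I"
    by (rule idsum_absorb[OF MI principal_sub[OF dom MI x(1)]]) (auto simp: principal_def intro: exI[of _ 0] dom_facts[OF dom])
  finally have le: "st (idprod_list D Ps) \<subseteq> I" using stI by simp
  show ?thesis using homP pwP ge le by (intro exI[of _ Ps]) auto
qed

end


lemma in_set_remove1_D: "x \<in> set (remove1 y L) \<Longrightarrow> x \<in> set L"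
  using set_remove1_subset by fast

context SD begin

lemma factor_sub:
  assumes J: "J \<in> set L" and L: "\<And>K. K \<in> set L \<Longrightarrow> frac_ideal D K \<and> K \<subseteq> D" and sJ: "st J = J"
  shows "st (idprod_list D L) \<subseteq> J"
proof -
  have fJ: "frac_ideal D J" using L J by blast
  have fR: "frac_ideal D (idprod_list D (remove1 J L))" by (rule frac_prodl) (use L in \<open>auto dest: in_set_remove1_D\<close>)
  have iR: "idprod_list D (remove1 J L) \<subseteq> D" by (rule integral_prodl) (use L in \<open>auto dest: in_set_remove1_D\<close>)
  have "idprod_list D L = idprod J (idprod_list D (remove1 J L))" by (rule prodl_remove1[OF J])
  also have "\<dots> \<subseteq> idprod J D" by (rule idprod_mono[OF order_refl iR])
  also have "\<dots> = J" by (rule idprod_D_right[OF dom frac_mdl[OF fJ]])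
  finally have "idprod_list D L \<subseteq> J" .
  hence "st (idprod_list D L) \<subseteq> st J" using st_mono[OF frac_prodl fJ] L by blast
  thus ?thesis using sJ by simp
qed

lemma unique_one:
  assumes J: "star_homog D st J" and L: "\<forall>K\<in>set L. star_homog D st K" and pw: "pwl cmx L"
    and sub: "st (idprod_list D L) \<subseteq> J"
  shows "\<exists>K\<in>set L. K \<subseteq> J \<and> \<not> cmx J K \<and> (\<forall>K'\<in>set L. \<not> cmx J K' \<longrightarrow> K' = K)"
proof -
  have pJ: "pift D st J" by (rule homog_pift[OF J])
  have fJ: "frac_ideal D J" "J \<subseteq> D" "st J = J" "J \<noteq> D"
    using pift_frac[OF pJ] pift_int[OF pJ] pift_st[OF pJ] pift_ne[OF pJ] .
  have pK: "pift D st K" if "K \<in> set L" for K using L that homog_pift by blast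
  have fL: "frac_ideal D (idprod_list D L)" by (rule frac_prodl) (use pK pift_frac in blast)
  have iL: "idprod_list D L \<subseteq> D" by (rule integral_prodl) (use pK pift_int in blast)
  have ex: "\<exists>K\<in>set L. \<not> cmx J K"
  proof (rule ccontr)
    assume "\<not> (\<exists>K\<in>set L. \<not> cmx J K)"
    hence c: "st (idsum J (idprod_list D L)) = D"
      using pK pift_frac pift_int by (intro comax_prodl[OF fJ(1,2)]) (auto simp: cmx_def)
    have "idprod D (idprod_list D L) \<subseteq> J"
      using idprod_D_left[OF dom frac_mdl[OF fL]] st_ext[OF fL] sub by blast
    hence "D \<subseteq> J" by (rule cancel[OF fJ(1,2,3) fD order_refl fL iL _ c])
    thus False using fJ(2,4) by blast
  qed
  then obtain K where K: "K \<in> set L" "\<not> cmx J K" by blast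
  have others: "cmx J K'" if K': "K' \<in> set (remove1 K L)" for K'
  proof (rule ccontr)
    assume n: "\<not> cmx J K'"
    have K'L: "K' \<in> set L" using K' by (rule in_set_remove1_D)
    have "cmx K K'" by (rule pwl_two[of cmx, OF cmx_sym pw K(1) K'])
    hence "st (idsum J K) = D \<or> st (idsum J K') = D"
      unfolding cmx_def by (rule homog_two[OF J pK[OF K(1)] pK[OF K'L]])
    thus False using n K(2) unfolding cmx_def by blast
  qed
  define R where "R = idprod_list D (remove1 K L)"
  have fR: "frac_ideal D R" unfolding R_def by (rule frac_prodl) (use pK pift_frac in \<open>auto dest: in_set_remove1_D\<close>)
  have iR: "R \<subseteq> D" unfolding R_def by (rule integral_prodl) (use pK pift_int in \<open>auto dest: in_set_remove1_D\<close>)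
  have cR: "st (idsum J R) = D" unfolding R_def
  proof (rule comax_prodl[OF fJ(1,2)])
    fix K' assume h: "K' \<in> set (remove1 K L)"
    have "pift D st K'" using pK[OF in_set_remove1_D[OF h]] .
    thus "frac_ideal D K' \<and> K' \<subseteq> D \<and> st (idsum J K') = D"
      using pift_frac pift_int others[OF h] unfolding cmx_def by blast
  qed
  have "idprod K R = idprod_list D L" unfolding R_def by (rule prodl_remove1[OF K(1), symmetric])
  hence "idprod K R \<subseteq> J" using st_ext[OF fL] sub by blast
  hence KJ: "K \<subseteq> J" by (rule cancel[OF fJ(1,2,3) pift_frac[OF pK[OF K(1)]] pift_int[OF pK[OF K(1)]] fR iR _ cR])
  have uq: "\<forall>K'\<in>set L. \<not> cmx J K' \<longrightarrow> K' = K"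
  proof (intro ballI impI)
    fix K' assume "K' \<in> set L" "\<not> cmx J K'"
    thus "K' = K" using others by (metis in_set_remove1)
  qed
  show ?thesis using K KJ uq by blast
qed

lemma homog_idsum_self: assumes "star_homog D st J" shows "\<not> cmx J J"
proof -
  have pJ: "pift D st J" by (rule homog_pift[OF assms])
  have "idsum J J = J" by (rule idsum_absorb[OF frac_mdl[OF pift_frac[OF pJ]] order_refl frac_0[OF pift_frac[OF pJ]]])
  thus ?thesis unfolding cmx_def using pift_st[OF pJ] pift_ne[OF pJ] by simp
qed

lemma distinct_fact: "\<forall>K\<in>set L. star_homog D st K \<Longrightarrow> pwl cmx L \<Longrightarrow> distinct L"
proof (induction L)
  case (Cons x xs)
  have "x \<notin> set xs" using Cons.prems homog_idsum_self[of x] unfolding pwl_cmx_Cons by auto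
  thus ?case using Cons unfolding pwl_cmx_Cons by simp
qed simp

lemma set_sub:
  assumes L1: "\<forall>K\<in>set L1. star_homog D st K" "pwl cmx L1"
    and L2: "\<forall>K\<in>set L2. star_homog D st K" "pwl cmx L2"
    and eq: "st (idprod_list D L1) = st (idprod_list D L2)"
  shows "set L1 \<subseteq> set L2"
proof
  fix J assume J: "J \<in> set L1"
  have pJ: "pift D st J" using L1 J homog_pift by blast
  have fr: "\<And>K. K \<in> set L1 \<Longrightarrow> frac_ideal D K \<and> K \<subseteq> D" using L1(1) homog_pift pift_frac pift_int by blast
  have fr2: "\<And>K. K \<in> set L2 \<Longrightarrow> frac_ideal D K \<and> K \<subseteq> D" using L2(1) homog_pift pift_frac pift_int by blast
  have s1: "st (idprod_list D L2) \<subseteq> J" using factor_sub[OF J fr pift_st[OF pJ]] eq by simp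
  obtain K where K: "K \<in> set L2" "K \<subseteq> J" "\<not> cmx J K"
    using unique_one[OF L1(1)[rule_format, OF J] L2 s1] by blast
  have pK: "pift D st K" using L2 K homog_pift by blast
  have s2: "st (idprod_list D L1) \<subseteq> K" using factor_sub[OF K(1) fr2 pift_st[OF pK]] eq by simp
  obtain J' where J': "J' \<in> set L1" "J' \<subseteq> K" "\<forall>K'\<in>set L1. \<not> cmx K K' \<longrightarrow> K' = J'"
    using unique_one[OF L2(1)[rule_format, OF K(1)] L1 s2] by blast
  have "\<not> cmx K J" using K(3) cmx_sym by blast
  hence "J = J'" using J'(3) J by blast
  hence "J = K" using J'(2) K(2) by blast
  thus "J \<in> set L2" using K(1) by simp
qed

end

theorem mainTheorem16:
  fixes D :: "'k::field set" and st :: "'k set \<Rightarrow> 'k set" and I :: "'k set"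
  assumes "is_domain_in D"
    and "star_operation D st" and "finite_character D st"
    and "star_SH D st"
    and "star_ideal D st I" and "I \<subseteq> D" and "I \<noteq> D" and "star_invertible D st I"
  shows "\<exists>Is. homog_comax_factorization D st I Is \<and>
           (\<forall>Js. homog_comax_factorization D st I Js \<longrightarrow> mset Js = mset Is)"
proof -
  interpret SD D st by (unfold_locales; fact)
  have hcf: "homog_comax_factorization D st I L \<longleftrightarrow>
      (\<forall>J\<in>set L. star_homog D st J) \<and> pwl cmx L \<and> I = st (idprod_list D L)" for L
    unfolding homog_comax_factorization_def pwl_def cmx_eq by blast
  obtain Is where Is: "\<forall>J\<in>set Is. star_homog D st J" "pwl cmx Is" "I = st (idprod_list D Is)"
    using existence[OF assms(3-8)] by blast
  have "\<forall>Js. homog_comax_factorization D st I Js \<longrightarrow> mset Js = mset Is"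
  proof (intro allI impI)
    fix Js assume "homog_comax_factorization D st I Js"
    hence Js: "\<forall>J\<in>set Js. star_homog D st J" "pwl cmx Js" "I = st (idprod_list D Js)" unfolding hcf by blast+
    have "set Js = set Is"
      using set_sub[OF Js(1,2) Is(1,2)] set_sub[OF Is(1,2) Js(1,2)] Js(3) Is(3) by simp
    thus "mset Js = mset Is"
      using distinct_fact[OF Js(1,2)] distinct_fact[OF Is(1,2)] set_eq_iff_mset_eq_distinct by blast
  qed
  thus ?thesis using Is unfolding hcf by blast
qed


end
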